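(* Let $q$ be a prime power. A rank-$r$ matroid $M$ in $\mathcal{M}_q$ is round if and only if $M\cong PG(r-1,q)$.
   Context: A matroid is round if it has no two disjoint cocircuits. For matroids $M_1,M_2$ whose ground sets meet in a set $T$ that is a modular flat of $M_1$ with $M_1|T=M_2|T=N$, the generalized parallel connection $P_N(M_1,M_2)$ is the matroid on $E(M_1)\cup E(M_2)$ whose flats are the sets $Z$ with $Z\cap E(M_i)$ a flat of $M_i$ for $i=1,2$ (if $T=\emptyset$ this is $M_1\oplus M_2$). $\mathcal{M}_q$ is the class of matroids that can be built from projective geometries over $GF(q)$ by a sequence of generalized parallel connections across projective geometries over $GF(q)$. *)

theory Defs
  imports "HOL-Algebra.Ring" "HOL-Computational_Algebra.Primes"
begin

type_synonym 'a matroid = "'a set \<times> ('a set \<Rightarrow> bool)"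

definition gr :: "'a matroid \<Rightarrow> 'a set" where "gr M = fst M"
definition indep :: "'a matroid \<Rightarrow> 'a set \<Rightarrow> bool" where "indep M = snd M"

definition matroid :: "'a matroid \<Rightarrow> bool" where
  "matroid M \<longleftrightarrow> finite (gr M) \<and> indep M {} \<and>
     (\<forall>X. indep M X \<longrightarrow> X \<subseteq> gr M) \<and>
     (\<forall>X Y. indep M X \<and> Y \<subseteq> X \<longrightarrow> indep M Y) \<and>
     (\<forall>X Y. indep M X \<and> indep M Y \<and> card X < card Y \<longrightarrow>
        (\<exists>e\<in>Y - X. indep M (insert e X)))"

definition mrank_of :: "'a matroid \<Rightarrow> 'a set \<Rightarrow> nat" where
  "mrank_of M X = Max {card I | I. I \<subseteq> X \<and> indep M I}"

definition matroid_rank :: "'a matroid \<Rightarrow> nat" where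
  "matroid_rank M = mrank_of M (gr M)"

definition mclosure :: "'a matroid \<Rightarrow> 'a set \<Rightarrow> 'a set" where
  "mclosure M X = {e \<in> gr M. mrank_of M (insert e X) = mrank_of M X}"

definition flat :: "'a matroid \<Rightarrow> 'a set \<Rightarrow> bool" where
  "flat M F \<longleftrightarrow> F \<subseteq> gr M \<and> mclosure M F = F"

definition modular_flat :: "'a matroid \<Rightarrow> 'a set \<Rightarrow> bool" where
  "modular_flat M F \<longleftrightarrow> flat M F \<and>
     (\<forall>G. flat M G \<longrightarrow>
        mrank_of M F + mrank_of M G = mrank_of M (F \<union> G) + mrank_of M (F \<inter> G))"

definition basis :: "'a matroid \<Rightarrow> 'a set \<Rightarrow> bool" where
  "basis M B \<longleftrightarrow> indep M B \<and> (\<forall>X. indep M X \<and> B \<subseteq> X \<longrightarrow> X = B)"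

text \<open>Cocircuits: minimal nonempty subsets of the ground set meeting every basis
  (i.e. circuits of the dual matroid).\<close>
definition codependent :: "'a matroid \<Rightarrow> 'a set \<Rightarrow> bool" where
  "codependent M C \<longleftrightarrow> C \<subseteq> gr M \<and> C \<noteq> {} \<and> (\<forall>B. basis M B \<longrightarrow> C \<inter> B \<noteq> {})"

definition cocircuit :: "'a matroid \<Rightarrow> 'a set \<Rightarrow> bool" where
  "cocircuit M C \<longleftrightarrow> codependent M C \<and> (\<forall>D. D \<subset> C \<longrightarrow> \<not> codependent M D)"

definition round :: "'a matroid \<Rightarrow> bool" where
  "round M \<longleftrightarrow> \<not> (\<exists>C D. cocircuit M C \<and> cocircuit M D \<and> C \<inter> D = {})"

definition restrict :: "'a matroid \<Rightarrow> 'a set \<Rightarrow> 'a matroid" where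
  "restrict M T = (T, \<lambda>X. indep M X \<and> X \<subseteq> T)"

definition miso :: "'a matroid \<Rightarrow> 'b matroid \<Rightarrow> bool" where
  "miso M M' \<longleftrightarrow> matroid M \<and> matroid M' \<and>
     (\<exists>f. bij_betw f (gr M) (gr M') \<and>
          (\<forall>X. X \<subseteq> gr M \<longrightarrow> (indep M X \<longleftrightarrow> indep M' (f ` X))))"

definition is_gen_par_conn :: "'a matroid \<Rightarrow> 'a matroid \<Rightarrow> 'a matroid \<Rightarrow> bool" where
  "is_gen_par_conn M1 M2 M \<longleftrightarrow> matroid M \<and> gr M = gr M1 \<union> gr M2 \<and>
     (\<forall>Z. flat M Z \<longleftrightarrow> Z \<subseteq> gr M \<and> flat M1 (Z \<inter> gr M1) \<and> flat M2 (Z \<inter> gr M2))"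

definition pg_vectors :: "('b, 'm) ring_scheme \<Rightarrow> nat \<Rightarrow> (nat \<Rightarrow> 'b) set" where
  "pg_vectors R d = {v. (\<forall>i<d. v i \<in> carrier R) \<and> (\<forall>i\<ge>d. v i = \<zero>\<^bsub>R\<^esub>)}"

definition pg_zero :: "('b, 'm) ring_scheme \<Rightarrow> nat \<Rightarrow> 'b" where
  "pg_zero R = (\<lambda>i. \<zero>\<^bsub>R\<^esub>)"

definition pg_line :: "('b, 'm) ring_scheme \<Rightarrow> (nat \<Rightarrow> 'b) \<Rightarrow> (nat \<Rightarrow> 'b) set" where
  "pg_line R v = {(\<lambda>i. a \<otimes>\<^bsub>R\<^esub> v i) | a. a \<in> carrier R}"

definition pg_points :: "('b, 'm) ring_scheme \<Rightarrow> nat \<Rightarrow> (nat \<Rightarrow> 'b) set set" where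
  "pg_points R d = {pg_line R v | v. v \<in> pg_vectors R d \<and> v \<noteq> pg_zero R}"

text \<open>A set of points is independent iff the corresponding lines are linearly
  independent, i.e. their sum is direct.\<close>
definition pg_indep :: "('b, 'm) ring_scheme \<Rightarrow> nat \<Rightarrow> (nat \<Rightarrow> 'b) set set \<Rightarrow> bool" where
  "pg_indep R d P \<longleftrightarrow> P \<subseteq> pg_points R d \<and>
     (\<forall>c. (\<forall>p\<in>P. c p \<in> p) \<and> (\<lambda>i. finsum R (\<lambda>p. c p i) P) = pg_zero R
          \<longrightarrow> (\<forall>p\<in>P. c p = pg_zero R))"

text \<open>PG R d is the projective geometry PG(d-1, R); it has rank d.\<close>
definition PG :: "('b, 'm) ring_scheme \<Rightarrow> nat \<Rightarrow> (nat \<Rightarrow> 'b) set matroid" where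
  "PG R d = (pg_points R d, pg_indep R d)"

text \<open>M is isomorphic to PG(d-1,q) (GF(q) is represented by any field with q elements;
  all such fields are isomorphic, and any one can be put on a subset of nat).\<close>
definition iso_PG :: "nat \<Rightarrow> nat \<Rightarrow> 'a matroid \<Rightarrow> bool" where
  "iso_PG q d M \<longleftrightarrow> (\<exists>R :: nat ring. field R \<and> finite (carrier R) \<and>
       card (carrier R) = q \<and> miso M (PG R d))"

definition is_PG_over :: "nat \<Rightarrow> 'a matroid \<Rightarrow> bool" where
  "is_PG_over q M \<longleftrightarrow> (\<exists>d. iso_PG q d M)"

inductive in_Mq :: "nat \<Rightarrow> 'a matroid \<Rightarrow> bool" for q where
  pg: "is_PG_over q M \<Longrightarrow> in_Mq q M"
| iso: "in_Mq q M \<Longrightarrow> miso M M' \<Longrightarrow> in_Mq q M'"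
| gpc: "in_Mq q M1 \<Longrightarrow> in_Mq q M2 \<Longrightarrow> T = gr M1 \<inter> gr M2 \<Longrightarrow>
        modular_flat M1 T \<Longrightarrow> restrict M1 T = restrict M2 T \<Longrightarrow>
        is_PG_over q (restrict M1 T) \<Longrightarrow> is_gen_par_conn M1 M2 M \<Longrightarrow> in_Mq q M"

definition prime_power :: "nat \<Rightarrow> bool" where
  "prime_power q \<longleftrightarrow> (\<exists>p k. prime p \<and> k \<ge> 1 \<and> q = p ^ k)"

end

theory Submission
  imports Defs
begin

lemma mat_fin: "matroid M \<Longrightarrow> finite (gr M)" by (simp add: matroid_def)
lemma mat_sub: "matroid M \<Longrightarrow> indep M X \<Longrightarrow> X \<subseteq> gr M" by (simp add: matroid_def)
lemma mat_empty: "matroid M \<Longrightarrow> indep M {}" by (simp add: matroid_def)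
lemma mat_mono: assumes "matroid M" "indep M X" "Y \<subseteq> X" shows "indep M Y"
proof -
  have "\<forall>X Y. indep M X \<and> Y \<subseteq> X \<longrightarrow> indep M Y" using assms(1) unfolding matroid_def by (elim conjE)
  then show ?thesis using assms by blast
qed
lemma mat_aug: assumes "matroid M" "indep M X" "indep M Y" "card X < card Y" shows
   "\<exists>e\<in>Y - X. indep M (insert e X)"
proof -
  have "\<forall>X Y. indep M X \<and> indep M Y \<and> card X < card Y \<longrightarrow>
        (\<exists>e\<in>Y - X. indep M (insert e X))" using assms(1) unfolding matroid_def by (elim conjE)
  then show ?thesis using assms by blast
qed
lemma mat_ifin: "matroid M \<Longrightarrow> indep M X \<Longrightarrow> finite X"
  by (rule finite_subset[OF mat_sub mat_fin])


lemma aug_size: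
  assumes M: "matroid M" and I: "indep M I" and J: "indep M J" and n: "card I \<le> n" "n \<le> card J"
  shows "\<exists>K. I \<subseteq> K \<and> K \<subseteq> I \<union> J \<and> indep M K \<and> card K = n"
  using n
proof (induction n)
  case 0 then show ?case using I by (intro exI[of _ I]) simp
next
  case (Suc n)
  show ?case
  proof (cases "card I = Suc n")
    case True then show ?thesis using I by (intro exI[of _ I]) simp
  next
    case False
    then have "card I \<le> n" "n \<le> card J" using Suc.prems by auto
    then obtain K where K: "I \<subseteq> K" "K \<subseteq> I \<union> J" "indep M K" "card K = n" using Suc.IH by blast
    then have "card K < card J" using Suc.prems by auto
    then obtain e where e: "e \<in> J - K" "indep M (insert e K)" using mat_aug[OF M K(3) J] by blast
    have "finite K" using mat_ifin[OF M K(3)] .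
    then have "card (insert e K) = Suc n" using e K(4) by auto
    then show ?thesis using K e by (intro exI[of _ "insert e K"]) auto
  qed
qed

lemma rank_set_fin: "matroid M \<Longrightarrow> finite {card I | I. I \<subseteq> X \<and> indep M I}"
proof -
  assume M: "matroid M"
  have "{card I | I. I \<subseteq> X \<and> indep M I} \<subseteq> {..card (gr M)}"
  proof
    fix x assume "x \<in> {card I | I. I \<subseteq> X \<and> indep M I}"
    then obtain I where "x = card I" "indep M I" by blast
    then have "I \<subseteq> gr M" using M mat_sub by blast
    then show "x \<in> {..card (gr M)}" using M \<open>x = card I\<close> by (simp add: card_mono mat_fin)
  qed
  then show ?thesis by (rule finite_subset) simp
qed

lemma rank_ge: "matroid M \<Longrightarrow> I \<subseteq> X \<Longrightarrow> indep M I \<Longrightarrow> card I \<le> mrank_of M X"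
  unfolding mrank_of_def by (rule Max_ge[OF rank_set_fin]) auto

lemma rank_obtain: "matroid M \<Longrightarrow> \<exists>I. I \<subseteq> X \<and> indep M I \<and> card I = mrank_of M X"
proof -
  assume M: "matroid M"
  have "{card I | I. I \<subseteq> X \<and> indep M I} \<noteq> {}" using mat_empty[OF M] by blast
  from Max_in[OF rank_set_fin[OF M] this] show ?thesis unfolding mrank_of_def by auto
qed

lemma rank_le: "matroid M \<Longrightarrow> (\<And>I. I \<subseteq> X \<Longrightarrow> indep M I \<Longrightarrow> card I \<le> k) \<Longrightarrow> mrank_of M X \<le> k"
proof -
  assume M: "matroid M" and h: "\<And>I. I \<subseteq> X \<Longrightarrow> indep M I \<Longrightarrow> card I \<le> k"
  obtain I where I: "I \<subseteq> X" "indep M I" "card I = mrank_of M X" using rank_obtain[OF M] by blast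
  show ?thesis using h[OF I(1,2)] I(3) by simp
qed

lemma rank_mono: "matroid M \<Longrightarrow> X \<subseteq> Y \<Longrightarrow> mrank_of M X \<le> mrank_of M Y"
proof -
  assume M: "matroid M" and XY: "X \<subseteq> Y"
  show ?thesis
  proof (rule rank_le[OF M])
    fix I assume "I \<subseteq> X" "indep M I"
    then show "card I \<le> mrank_of M Y" using rank_ge[OF M _ \<open>indep M I\<close>] XY by simp
  qed
qed

lemma rank_card: "matroid M \<Longrightarrow> finite X \<Longrightarrow> mrank_of M X \<le> card X"
proof -
  assume M: "matroid M" and X: "finite X"
  show ?thesis
  proof (rule rank_le[OF M])
    fix I assume "I \<subseteq> X" "indep M I"
    then show "card I \<le> card X" using X by (simp add: card_mono)
  qed
qed

lemma rank_indep: "matroid M \<Longrightarrow> indep M I \<Longrightarrow> mrank_of M I = card I"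
proof -
  assume M: "matroid M" and I: "indep M I"
  have "mrank_of M I \<le> card I" using rank_card[OF M mat_ifin[OF M I]] .
  moreover have "card I \<le> mrank_of M I" using rank_ge[OF M _ I] by simp
  ultimately show ?thesis by simp
qed

lemma rank_extend:
  assumes M: "matroid M" and K: "K \<subseteq> X" "indep M K"
  shows "\<exists>J. K \<subseteq> J \<and> J \<subseteq> X \<and> indep M J \<and> card J = mrank_of M X"
proof -
  obtain J0 where J0: "J0 \<subseteq> X" "indep M J0" "card J0 = mrank_of M X" using rank_obtain[OF M] by blast
  have "card K \<le> card J0" using rank_ge[OF M K] J0 by simp
  then obtain J where "K \<subseteq> J" "J \<subseteq> K \<union> J0" "indep M J" "card J = card J0"
    using aug_size[OF M K(2) J0(2)] by blast
  then show ?thesis using J0 K by (intro exI[of _ J]) auto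
qed

lemma rank_maxcard:
  assumes M: "matroid M" and I: "I \<subseteq> X" "indep M I" and mx: "\<forall>e\<in>X - I. \<not> indep M (insert e I)"
  shows "card I = mrank_of M X"
proof (rule ccontr)
  assume "card I \<noteq> mrank_of M X"
  then have "card I < mrank_of M X" using rank_ge[OF M I] by simp
  moreover obtain J where "J \<subseteq> X" "indep M J" "card J = mrank_of M X" using rank_obtain[OF M] by blast
  ultimately have "card I < card J" by simp
  then obtain e where "e \<in> J - I" "indep M (insert e I)" using mat_aug[OF M I(2) \<open>indep M J\<close>] by blast
  then show False using mx \<open>J \<subseteq> X\<close> by blast
qed

lemma cl_sub: "mclosure M X \<subseteq> gr M" unfolding mclosure_def by auto

lemma cl_incl: "X \<subseteq> gr M \<Longrightarrow> X \<subseteq> mclosure M X"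
  unfolding mclosure_def by (auto simp: insert_absorb)

lemma cl_mono:
  assumes M: "matroid M" and XY: "X \<subseteq> Y" and e: "e \<in> mclosure M X"
  shows "e \<in> mclosure M Y"
proof -
  have eg: "e \<in> gr M" and eX: "mrank_of M (insert e X) = mrank_of M X" using e unfolding mclosure_def by auto
  obtain K where K: "K \<subseteq> X" "indep M K" "card K = mrank_of M X" using rank_obtain[OF M] by blast
  obtain J where J: "K \<subseteq> J" "J \<subseteq> Y" "indep M J" "card J = mrank_of M Y"
    using rank_extend[OF M _ K(2), of Y] K XY by blast
  show ?thesis
  proof (rule ccontr)
    assume "e \<notin> mclosure M Y"
    then have ne: "mrank_of M (insert e Y) \<noteq> mrank_of M Y" using eg unfolding mclosure_def by auto
    then have eY: "e \<notin> Y" by (auto simp: insert_absorb)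
    have "mrank_of M Y \<le> mrank_of M (insert e Y)" using rank_mono[OF M subset_insertI] by simp
    with ne have lt: "card J < mrank_of M (insert e Y)" using J by simp
    obtain I where I: "I \<subseteq> insert e Y" "indep M I" "card I = mrank_of M (insert e Y)" using rank_obtain[OF M] by blast
    obtain f where f: "f \<in> I - J" "indep M (insert f J)" using mat_aug[OF M J(3) I(2)] lt I by auto
    have fJ: "finite J" using mat_ifin[OF M J(3)] .
    have "f = e"
    proof (rule ccontr)
      assume "f \<noteq> e"
      then have "f \<in> Y" using f I by auto
      then have "card (insert f J) \<le> mrank_of M Y" using rank_ge[OF M _ f(2)] J by auto
      then show False using f fJ J by auto
    qed
    then have "indep M (insert e K)" using mat_mono[OF M f(2), of "insert e K"] J(1) by auto
    moreover have "e \<notin> K" using eY K XY by auto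
    ultimately have "card (insert e K) \<le> mrank_of M (insert e X)"
      using rank_ge[OF M insert_mono[OF K(1)]] by blast
    then show False using eX K mat_ifin[OF M K(2)] \<open>e \<notin> K\<close> by auto
  qed
qed

lemma cl_mono': assumes "matroid M" "X \<subseteq> Y" shows "mclosure M X \<subseteq> mclosure M Y"
  using cl_mono[OF assms] by (rule subsetI)

lemma rank_cl:
  assumes M: "matroid M" and X: "X \<subseteq> gr M"
  shows "mrank_of M (mclosure M X) = mrank_of M X"
proof (rule antisym)
  show "mrank_of M X \<le> mrank_of M (mclosure M X)" using rank_mono[OF M cl_incl[OF X]] .
  obtain K where K: "K \<subseteq> X" "indep M K" "card K = mrank_of M X" using rank_obtain[OF M] by blast
  show "mrank_of M (mclosure M X) \<le> mrank_of M X"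
  proof (rule rank_le[OF M], rule ccontr)
    fix I assume I: "I \<subseteq> mclosure M X" "indep M I" and "\<not> card I \<le> mrank_of M X"
    then have "card K < card I" using K by simp
    then obtain e where e: "e \<in> I - K" "indep M (insert e K)" using mat_aug[OF M K(2) I(2)] by blast
    then have "e \<in> mclosure M X" using I by auto
    then have eq: "mrank_of M (insert e X) = mrank_of M X" unfolding mclosure_def by auto
    have "card (insert e K) \<le> mrank_of M (insert e X)" using rank_ge[OF M _ e(2)] K by auto
    then show False using eq K e mat_ifin[OF M K(2)] by auto
  qed
qed

lemma cl_idem:
  assumes M: "matroid M" and X: "X \<subseteq> gr M"
  shows "mclosure M (mclosure M X) = mclosure M X"
proof
  show "mclosure M X \<subseteq> mclosure M (mclosure M X)" by (rule cl_incl[OF cl_sub])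
  show "mclosure M (mclosure M X) \<subseteq> mclosure M X"
  proof
    fix e assume e: "e \<in> mclosure M (mclosure M X)"
    then have eg: "e \<in> gr M" and eq: "mrank_of M (insert e (mclosure M X)) = mrank_of M X"
      using rank_cl[OF M X] unfolding mclosure_def by auto
    have "mrank_of M (insert e X) \<le> mrank_of M (insert e (mclosure M X))"
      using rank_mono[OF M insert_mono[OF cl_incl[OF X]]] .
    moreover have "mrank_of M X \<le> mrank_of M (insert e X)" using rank_mono[OF M subset_insertI] by simp
    ultimately show "e \<in> mclosure M X" using eq eg unfolding mclosure_def by auto
  qed
qed

lemma flat_cl: assumes M: "matroid M" and X: "X \<subseteq> gr M" shows "flat M (mclosure M X)"
  unfolding flat_def using cl_idem[OF M X] cl_sub[of M X] by simp

lemma flat_gr: "flat M (gr M)"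
  unfolding flat_def using cl_sub[of M "gr M"] cl_incl[of "gr M" M] by simp

lemma cl_least: assumes M: "matroid M" and XF: "X \<subseteq> F" and F: "flat M F" shows "mclosure M X \<subseteq> F"
  using cl_mono'[OF M XF] F unfolding flat_def by simp

lemma indep_char:
  assumes M: "matroid M"
  shows "indep M I \<longleftrightarrow> I \<subseteq> gr M \<and> (\<forall>e\<in>I. e \<notin> mclosure M (I - {e}))"
proof
  assume I: "indep M I"
  have fI: "finite I" using mat_ifin[OF M I] .
  show "I \<subseteq> gr M \<and> (\<forall>e\<in>I. e \<notin> mclosure M (I - {e}))"
  proof (intro conjI ballI)
    show "I \<subseteq> gr M" using mat_sub[OF M I] .
    fix e assume e: "e \<in> I"
    have "mrank_of M (I - {e}) \<le> card (I - {e})" using rank_card[OF M] fI by simp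
    also have "\<dots> < card I" using card_Diff1_less[OF fI e] .
    finally have lt: "mrank_of M (I - {e}) < card I" .
    have "mrank_of M (insert e (I - {e})) = card I" using e rank_indep[OF M I] by (simp add: insert_absorb)
    then show "e \<notin> mclosure M (I - {e})" using lt unfolding mclosure_def by auto
  qed
next
  assume A: "I \<subseteq> gr M \<and> (\<forall>e\<in>I. e \<notin> mclosure M (I - {e}))"
  show "indep M I"
  proof (rule ccontr)
    assume ni: "\<not> indep M I"
    obtain K where K: "K \<subseteq> I" "indep M K" "card K = mrank_of M I" using rank_obtain[OF M] by blast
    have "K \<noteq> I" using ni K(2) by auto
    then obtain e where e: "e \<in> I" "e \<notin> K" using K(1) by blast
    have "K \<subseteq> I - {e}" using K(1) e by blast
    have "card K \<le> mrank_of M (I - {e})" using rank_ge[OF M \<open>K \<subseteq> I - {e}\<close> K(2)] .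
    moreover have "mrank_of M (I - {e}) \<le> mrank_of M I" using rank_mono[OF M Diff_subset] .
    ultimately have "mrank_of M (insert e (I - {e})) = mrank_of M (I - {e})"
      using K e by (simp add: insert_absorb)
    then have "e \<in> mclosure M (I - {e})" using A e unfolding mclosure_def by auto
    then show False using A e by blast
  qed
qed

lemma cl_inter:
  assumes M: "matroid M" and X: "X \<subseteq> gr M"
  shows "mclosure M X = \<Inter>{F. flat M F \<and> X \<subseteq> F}"
proof
  show "mclosure M X \<subseteq> \<Inter>{F. flat M F \<and> X \<subseteq> F}"
    by (rule Inter_greatest) (simp add: cl_least[OF M])
  show "\<Inter>{F. flat M F \<and> X \<subseteq> F} \<subseteq> mclosure M X"
    by (rule Inter_lower) (simp add: flat_cl[OF M X] cl_incl[OF X])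
qed

lemma same_flats:
  assumes M: "matroid M" and N: "matroid N" and g: "gr M = gr N"
    and fl: "\<And>Z. flat M Z \<longleftrightarrow> flat N Z"
  shows "M = N"
proof -
  have cl: "mclosure M X = mclosure N X" if "X \<subseteq> gr M" for X
  proof -
    have "X \<subseteq> gr N" using that g by simp
    have "{F. flat M F \<and> X \<subseteq> F} = {F. flat N F \<and> X \<subseteq> F}" using fl by blast
    then show ?thesis using cl_inter[OF M that] cl_inter[OF N \<open>X \<subseteq> gr N\<close>] by simp
  qed
  have "indep M I \<longleftrightarrow> indep N I" for I
  proof -
    have "(\<forall>e\<in>I. e \<notin> mclosure M (I - {e})) \<longleftrightarrow> (\<forall>e\<in>I. e \<notin> mclosure N (I - {e}))"
      if "I \<subseteq> gr M"
    proof -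
      have "mclosure M (I - {e}) = mclosure N (I - {e})" for e
        using cl[of "I - {e}"] that by blast
      then show ?thesis by simp
    qed
    then show ?thesis using indep_char[OF M, of I] indep_char[OF N, of I] g by auto
  qed
  then have "snd M = snd N" unfolding indep_def by auto
  moreover have "fst M = fst N" using g unfolding gr_def .
  ultimately show ?thesis by (simp add: prod_eq_iff)
qed

lemma basis_indep: "basis M B \<Longrightarrow> indep M B" by (simp add: basis_def)

lemma basis_card:
  assumes M: "matroid M" and B: "basis M B" shows "card B = matroid_rank M"
proof -
  have I: "indep M B" using B by (simp add: basis_def)
  have "\<forall>e\<in>gr M - B. \<not> indep M (insert e B)"
  proof (intro ballI notI)
    fix e assume e: "e \<in> gr M - B" and ie: "indep M (insert e B)"
    then have "insert e B = B" using B unfolding basis_def by blast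
    then show False using e by blast
  qed
  then show ?thesis unfolding matroid_rank_def using rank_maxcard[OF M mat_sub[OF M I] I] by simp
qed

lemma rank_gr_ge: "matroid M \<Longrightarrow> indep M I \<Longrightarrow> card I \<le> matroid_rank M"
  unfolding matroid_rank_def by (rule rank_ge) (auto simp: mat_sub)

lemma card_basis:
  assumes M: "matroid M" and I: "indep M B" and c: "card B = matroid_rank M" shows "basis M B"
  unfolding basis_def
proof (intro conjI allI impI)
  show "indep M B" by fact
  fix X assume X: "indep M X \<and> B \<subseteq> X"
  then have "card X \<le> card B" using rank_gr_ge[OF M] c by simp
  moreover have fX: "finite X" using mat_ifin[OF M] X by simp
  moreover have "card B \<le> card X" using card_mono[OF fX] X by simp
  ultimately have "card B = card X" by simp
  then have "B = X" using card_subset_eq[OF fX, of B] X by blast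
  then show "X = B" by simp
qed

lemma basis_ex: assumes M: "matroid M" shows "\<exists>B. basis M B"
proof -
  obtain I where "I \<subseteq> gr M" "indep M I" "card I = mrank_of M (gr M)" using rank_obtain[OF M] by blast
  then show ?thesis using card_basis[OF M] unfolding matroid_rank_def by blast
qed

lemma cocirc_sub: "cocircuit M C \<Longrightarrow> C \<subseteq> gr M"
  by (simp add: cocircuit_def codependent_def)

lemma cocirc_ne: "cocircuit M C \<Longrightarrow> C \<noteq> {}"
  by (simp add: cocircuit_def codependent_def)

lemma cocirc_meets: "cocircuit M C \<Longrightarrow> basis M B \<Longrightarrow> C \<inter> B \<noteq> {}"
  by (simp add: cocircuit_def codependent_def)

lemma cocirc_basis:
  assumes M: "matroid M" and C: "cocircuit M C" and x: "x \<in> C"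
  shows "\<exists>B. basis M B \<and> B \<inter> C = {x}"
proof (cases "C - {x} = {}")
  case True
  obtain B where B: "basis M B" using basis_ex[OF M] by blast
  then have "C \<inter> B \<noteq> {}" using cocirc_meets[OF C] by simp
  then have "B \<inter> C = {x}" using True x by blast
  then show ?thesis using B by blast
next
  case False
  have "C - {x} \<subset> C" using x by blast
  then have "\<not> codependent M (C - {x})" using C unfolding cocircuit_def by blast
  moreover have "C - {x} \<subseteq> gr M" using cocirc_sub[OF C] by blast
  ultimately obtain B where B: "basis M B" "(C - {x}) \<inter> B = {}" using False unfolding codependent_def by blast
  moreover have "C \<inter> B \<noteq> {}" using cocirc_meets[OF C B(1)] .
  ultimately have "B \<inter> C = {x}" by blast
  then show ?thesis using B by blast
qed

lemma hyper_cocirc: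
  assumes M: "matroid M" and H: "flat M H" and Hne: "H \<noteq> gr M"
    and mx: "\<And>G. flat M G \<Longrightarrow> H \<subset> G \<Longrightarrow> G = gr M"
  shows "cocircuit M (gr M - H)"
proof -
  have Hg: "H \<subseteq> gr M" using H by (simp add: flat_def)
  have clH: "mclosure M H = H" using H by (simp add: flat_def)
  have cod: "codependent M (gr M - H)"
    unfolding codependent_def
  proof (intro conjI allI impI)
    show "gr M - H \<subseteq> gr M" by blast
    show "gr M - H \<noteq> {}" using Hg Hne by blast
    fix B assume B: "basis M B"
    show "(gr M - H) \<inter> B \<noteq> {}"
    proof
      assume dis: "(gr M - H) \<inter> B = {}"
      have BI: "indep M B" using basis_indep[OF B] .
      have "B \<subseteq> H" using mat_sub[OF M BI] dis by blast
      then have cB: "card B \<le> mrank_of M H" using rank_ge[OF M _ BI] by simp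
      have "gr M \<subseteq> H"
      proof
        fix e assume e: "e \<in> gr M"
        have "mrank_of M (insert e H) \<le> mrank_of M (gr M)" using rank_mono[OF M] e Hg by simp
        moreover have "mrank_of M H \<le> mrank_of M (insert e H)" using rank_mono[OF M subset_insertI] .
        ultimately have "mrank_of M (insert e H) = mrank_of M H"
          using cB basis_card[OF M B] unfolding matroid_rank_def by simp
        then have "e \<in> mclosure M H" using e unfolding mclosure_def by simp
        then show "e \<in> H" using clH by simp
      qed
      then show False using Hg Hne by blast
    qed
  qed
  show ?thesis
    unfolding cocircuit_def
  proof (intro conjI allI impI notI)
    show "codependent M (gr M - H)" by fact
    fix D assume D: "D \<subset> gr M - H" and cD: "codependent M D"
    obtain e where e: "e \<in> gr M - H" "e \<notin> D" using D by blast
    have eH: "insert e H \<subseteq> gr M" using e Hg by blast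
    have fG: "flat M (mclosure M (insert e H))" using flat_cl[OF M eH] .
    have "insert e H \<subseteq> mclosure M (insert e H)" using cl_incl[OF eH] .
    then have "H \<subset> mclosure M (insert e H)" using e by blast
    then have G: "mclosure M (insert e H) = gr M" using mx[OF fG] by simp
    have rk: "mrank_of M (insert e H) = matroid_rank M"
      using rank_cl[OF M eH] G unfolding matroid_rank_def by simp
    obtain J where J: "J \<subseteq> insert e H" "indep M J" "card J = mrank_of M (insert e H)"
      using rank_obtain[OF M] by blast
    have "basis M J" using card_basis[OF M J(2)] J(3) rk by simp
    moreover have "D \<inter> J = {}" using J(1) D e by blast
    ultimately show False using cD unfolding codependent_def by blast
  qed
qed

lemma flat_cocirc:
  assumes M: "matroid M" and F: "flat M F" and Fne: "F \<noteq> gr M"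
  shows "\<exists>C. cocircuit M C \<and> C \<inter> F = {}"
proof -
  let ?S = "{G. flat M G \<and> F \<subseteq> G \<and> G \<noteq> gr M}"
  have "?S \<subseteq> Pow (gr M)" by (auto simp: flat_def)
  then have fS: "finite ?S" using mat_fin[OF M] finite_subset by (metis finite_Pow_iff)
  have "F \<in> ?S" using F Fne by blast
  then have "?S \<noteq> {}" by blast
  from finite_has_maximal[OF fS this] obtain H where H: "H \<in> ?S" and Hm: "\<forall>b\<in>?S. H \<le> b \<longrightarrow> H = b" by blast
  have "cocircuit M (gr M - H)"
  proof (rule hyper_cocirc[OF M])
    show "flat M H" using H by simp
    show "H \<noteq> gr M" using H by simp
    fix G assume G: "flat M G" "H \<subset> G"
    show "G = gr M"
    proof (rule ccontr)
      assume "G \<noteq> gr M"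
      then have "G \<in> ?S" using G H by auto
      then show False using Hm G by blast
    qed
  qed
  moreover have "(gr M - H) \<inter> F = {}" using H by blast
  ultimately show ?thesis by blast
qed

lemma not_round_flats:
  assumes M: "matroid M" and F: "flat M F" "F \<noteq> gr M" and G: "flat M G" "G \<noteq> gr M"
    and FG: "F \<union> G = gr M"
  shows "\<not> round M"
proof -
  obtain C where C: "cocircuit M C" "C \<inter> F = {}" using flat_cocirc[OF M F] by blast
  obtain D where D: "cocircuit M D" "D \<inter> G = {}" using flat_cocirc[OF M G] by blast
  have "C \<inter> D = {}" using C D cocirc_sub[OF C(1)] FG by blast
  then show ?thesis unfolding round_def using C D by blast
qed

lemma key_cocirc:
  assumes M: "matroid M" and C: "cocircuit M C" and x: "x \<in> C"
    and y: "y \<in> gr M" "y \<notin> C" and z: "z \<in> gr M" "z \<notin> C" and yz: "y \<noteq> z"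
    and iyz: "indep M {y, z}" and nxyz: "\<not> indep M {x, y, z}"
  shows False
proof -
  obtain B where B: "basis M B" "B \<inter> C = {x}" using cocirc_basis[OF M C x] by blast
  have BI: "indep M B" using basis_indep[OF B(1)] .
  have fB: "finite B" using mat_ifin[OF M BI] .
  define K where "K = B - {x}"
  have xB: "x \<in> B" using B by blast
  have BK: "B = insert x K" and xK: "x \<notin> K" using xB unfolding K_def by auto
  have cBK: "card B = Suc (card K)" unfolding K_def using card_Suc_Diff1[OF fB xB] by simp
  have KI: "indep M K" using mat_mono[OF M BI] unfolding K_def by blast
  have KC: "K \<inter> C = {}" using B unfolding K_def by blast
  have claim: "card I \<le> card K" if I: "I \<subseteq> K \<union> {y, z}" "indep M I" for I
  proof (rule ccontr)
    assume "\<not> card I \<le> card K"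
    then have "card K < card I" by simp
    then obtain e where e: "e \<in> I - K" "indep M (insert e K)" using mat_aug[OF M KI I(2)] by blast
    have eyz: "e \<in> {y, z}" using e I by blast
    then have eC: "e \<notin> C" using y z by blast
    have "finite K" using fB unfolding K_def by simp
    then have "card (insert e K) = card B" using e cBK by simp
    then have "basis M (insert e K)" using card_basis[OF M e(2)] basis_card[OF M B(1)] by simp
    moreover have "C \<inter> insert e K = {}" using KC eC by blast
    ultimately show False using cocirc_meets[OF C] by blast
  qed
  have c2: "card {y, z} = 2" using yz by simp
  show False
  proof (cases "card B < 2")
    case True
    then have "card K = 0" using cBK by simp
    then show False using claim[of "{y,z}"] iyz c2 by simp
  next
    case False
    then have "card {y, z} \<le> card B" using c2 by simp
    then obtain L where L: "{y, z} \<subseteq> L" "L \<subseteq> {y, z} \<union> B" "indep M L" "card L = card B"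
      using aug_size[OF M iyz BI _ order_refl] by blast
    show False
    proof (cases "x \<in> L")
      case True
      then have "{x, y, z} \<subseteq> L" using L by blast
      then show False using mat_mono[OF M L(3)] nxyz by blast
    next
      case False
      then have LK: "L \<subseteq> K \<union> {y, z}" using L(2) BK by blast
      show False using claim[OF LK L(3)] L(4) cBK by simp
    qed
  qed
qed

lemma round_crit:
  assumes M: "matroid M"
    and two: "\<And>x y. x \<in> gr M \<Longrightarrow> y \<in> gr M \<Longrightarrow> x \<noteq> y \<Longrightarrow> indep M {x, y}"
    and three: "\<And>x y. x \<in> gr M \<Longrightarrow> y \<in> gr M \<Longrightarrow> x \<noteq> y \<Longrightarrow>
                   \<exists>z\<in>gr M. z \<noteq> x \<and> z \<noteq> y \<and> \<not> indep M {x, y, z}"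
  shows "round M"
  unfolding round_def
proof
  assume "\<exists>C D. cocircuit M C \<and> cocircuit M D \<and> C \<inter> D = {}"
  then obtain C D where C: "cocircuit M C" and D: "cocircuit M D" and CD: "C \<inter> D = {}" by blast
  obtain x where x: "x \<in> C" using cocirc_ne[OF C] by blast
  obtain y where y: "y \<in> D" using cocirc_ne[OF D] by blast
  have xg: "x \<in> gr M" using cocirc_sub[OF C] x by blast
  have yg: "y \<in> gr M" using cocirc_sub[OF D] y by blast
  have xy: "x \<noteq> y" using x y CD by blast
  obtain z where z: "z \<in> gr M" "z \<noteq> x" "z \<noteq> y" "\<not> indep M {x, y, z}" using three[OF xg yg xy] by blast
  show False
  proof (cases "z \<in> C")
    case False
    have "y \<notin> C" using y CD by blast
    then show False using key_cocirc[OF M C x yg _ z(1) False _ two[OF yg z(1)] z(4)] z(3) by blast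
  next
    case True
    then have zD: "z \<notin> D" using CD by blast
    have "x \<notin> D" using x CD by blast
    moreover have "\<not> indep M {y, x, z}" using z(4) by (simp add: insert_commute)
    ultimately show False using key_cocirc[OF M D y xg _ z(1) zD _ two[OF xg z(1)]] z(2) by blast
  qed
qed

lemma miso_sym: assumes "miso M M'" shows "miso M' M"
proof -
  obtain f where f: "bij_betw f (gr M) (gr M')"
    and h: "\<forall>X. X \<subseteq> gr M \<longrightarrow> (indep M X \<longleftrightarrow> indep M' (f ` X))"
    using assms unfolding miso_def by blast
  define g where "g = inv_into (gr M) f"
  have g: "bij_betw g (gr M') (gr M)" unfolding g_def by (rule bij_betw_inv_into[OF f])
  have "indep M' Y \<longleftrightarrow> indep M (g ` Y)" if Y: "Y \<subseteq> gr M'" for Y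
  proof -
    have gY: "g ` Y \<subseteq> gr M" using g Y bij_betw_imp_surj_on by blast
    have "f ` (g ` Y) = Y" unfolding g_def
      using image_inv_into_cancel[OF bij_betw_imp_surj_on[OF f] Y] .
    then show ?thesis using h gY by metis
  qed
  then show ?thesis using assms g unfolding miso_def by blast
qed

lemma miso_trans: assumes "miso M M'" "miso M' M''" shows "miso M M''"
proof -
  obtain f where f: "bij_betw f (gr M) (gr M')"
    and h: "\<forall>X. X \<subseteq> gr M \<longrightarrow> (indep M X \<longleftrightarrow> indep M' (f ` X))"
    using assms(1) unfolding miso_def by blast
  obtain f' where f': "bij_betw f' (gr M') (gr M'')"
    and h': "\<forall>X. X \<subseteq> gr M' \<longrightarrow> (indep M' X \<longleftrightarrow> indep M'' (f' ` X))"
    using assms(2) unfolding miso_def by blast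
  have "bij_betw (f' \<circ> f) (gr M) (gr M'')" using bij_betw_trans[OF f f'] .
  moreover have "indep M X \<longleftrightarrow> indep M'' ((f' \<circ> f) ` X)" if X: "X \<subseteq> gr M" for X
  proof -
    have "f ` X \<subseteq> gr M'" using X f bij_betw_imp_surj_on by blast
    then show ?thesis using h h' X by (simp add: image_image)
  qed
  ultimately show ?thesis using assms unfolding miso_def by blast
qed

lemma miso_rank_le: assumes "miso M M'" shows "matroid_rank M \<le> matroid_rank M'"
proof -
  obtain f where f: "bij_betw f (gr M) (gr M')"
    and h: "\<forall>X. X \<subseteq> gr M \<longrightarrow> (indep M X \<longleftrightarrow> indep M' (f ` X))"
    and M: "matroid M" and M': "matroid M'"
    using assms unfolding miso_def by blast
  obtain I where I: "I \<subseteq> gr M" "indep M I" "card I = matroid_rank M"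
    using rank_obtain[OF M] unfolding matroid_rank_def by blast
  have "inj_on f I" using bij_betw_imp_inj_on[OF f] I(1) inj_on_subset by blast
  then have "card (f ` I) = card I" by (rule card_image)
  moreover have "indep M' (f ` I)" using h I by blast
  ultimately show ?thesis using rank_gr_ge[OF M'] I(3) by metis
qed

lemma miso_rank: "miso M M' \<Longrightarrow> matroid_rank M = matroid_rank M'"
  using miso_rank_le miso_sym le_antisym by metis

lemma miso_cocirc:
  assumes iso: "miso M M'" and f: "bij_betw f (gr M) (gr M')"
    and h: "\<forall>X. X \<subseteq> gr M \<longrightarrow> (indep M X \<longleftrightarrow> indep M' (f ` X))"
    and C: "cocircuit M C"
  shows "cocircuit M' (f ` C)"
proof -
  have M: "matroid M" and M': "matroid M'" using iso unfolding miso_def by auto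
  have rk: "matroid_rank M = matroid_rank M'" using miso_rank[OF iso] .
  have inj: "inj_on f (gr M)" using bij_betw_imp_inj_on[OF f] .
  have im: "f ` gr M = gr M'" using bij_betw_imp_surj_on[OF f] .
  have btr: "basis M B \<longleftrightarrow> basis M' (f ` B)" if B: "B \<subseteq> gr M" for B
  proof -
    have "card (f ` B) = card B" using inj_on_subset[OF inj B] by (rule card_image)
    then show ?thesis using basis_card[OF M, of B] basis_card[OF M', of "f ` B"] card_basis[OF M, of B]
      card_basis[OF M', of "f ` B"] basis_indep[of M B] basis_indep[of M' "f ` B"] h B rk by metis
  qed
  have bpre: "\<exists>B. B \<subseteq> gr M \<and> B' = f ` B" if B': "basis M' B'" for B'
  proof -
    have "B' \<subseteq> gr M'" using mat_sub[OF M' basis_indep[OF B']] .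
    then show ?thesis using im by (metis subset_image_iff)
  qed
  have ctr: "codependent M' (f ` X) \<longleftrightarrow> codependent M X" if X: "X \<subseteq> gr M" for X
  proof
    assume cX: "codependent M X"
    show "codependent M' (f ` X)" unfolding codependent_def
    proof (intro conjI allI impI)
      show "f ` X \<subseteq> gr M'" using X im by blast
      show "f ` X \<noteq> {}" using cX unfolding codependent_def by blast
      fix B' assume B': "basis M' B'"
      obtain B where B: "B \<subseteq> gr M" "B' = f ` B" using bpre[OF B'] by blast
      then have "basis M B" using btr B' by simp
      then have "X \<inter> B \<noteq> {}" using cX unfolding codependent_def by blast
      then show "f ` X \<inter> B' \<noteq> {}" using B by blast
    qed
  next
    assume cX: "codependent M' (f ` X)"
    show "codependent M X" unfolding codependent_def
    proof (intro conjI allI impI)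
      show "X \<subseteq> gr M" by fact
      show "X \<noteq> {}" using cX unfolding codependent_def by blast
      fix B assume B: "basis M B"
      have Bg: "B \<subseteq> gr M" using mat_sub[OF M basis_indep[OF B]] .
      then have "basis M' (f ` B)" using btr B by simp
      then have "f ` X \<inter> f ` B \<noteq> {}" using cX unfolding codependent_def by blast
      then obtain a b where ab: "a \<in> X" "b \<in> B" "f a = f b" by blast
      then have "a = b" using inj X Bg unfolding inj_on_def by blast
      then show "X \<inter> B \<noteq> {}" using ab by blast
    qed
  qed
  have Cg: "C \<subseteq> gr M" using cocirc_sub[OF C] .
  show ?thesis unfolding cocircuit_def
  proof (intro conjI allI impI notI)
    show "codependent M' (f ` C)" using ctr[OF Cg] C unfolding cocircuit_def by blast
    fix D' assume D': "D' \<subset> f ` C" and cD: "codependent M' D'"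
    define D where "D = {c \<in> C. f c \<in> D'}"
    have fD: "f ` D = D'" using D' unfolding D_def by blast
    have DC: "D \<subset> C" using D' fD unfolding D_def by blast
    have "codependent M D" using ctr[of D] DC Cg cD fD by auto
    then show False using C DC unfolding cocircuit_def by blast
  qed
qed

lemma miso_round: assumes iso: "miso M M'" and r: "round M'" shows "round M"
proof -
  obtain f where f: "bij_betw f (gr M) (gr M')"
    and h: "\<forall>X. X \<subseteq> gr M \<longrightarrow> (indep M X \<longleftrightarrow> indep M' (f ` X))"
    using iso unfolding miso_def by blast
  show ?thesis unfolding round_def
  proof
    assume "\<exists>C D. cocircuit M C \<and> cocircuit M D \<and> C \<inter> D = {}"
    then obtain C D where C: "cocircuit M C" and D: "cocircuit M D" and CD: "C \<inter> D = {}" by blast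
    have "cocircuit M' (f ` C)" "cocircuit M' (f ` D)" using miso_cocirc[OF iso f h] C D by auto
    moreover have "f ` C \<inter> f ` D = {}"
    proof -
      have "inj_on f (C \<union> D)" using bij_betw_imp_inj_on[OF f] cocirc_sub[OF C] cocirc_sub[OF D]
        inj_on_subset by (metis Un_subset_iff)
      then show ?thesis using CD unfolding inj_on_def by blast
    qed
    ultimately show False using r unfolding round_def by blast
  qed
qed

lemma iso_PG_miso: "iso_PG q d M \<Longrightarrow> miso M M' \<Longrightarrow> iso_PG q d M'"
  unfolding iso_PG_def using miso_sym miso_trans by metis

lemma gr_restrict[simp]: "gr (restrict M T) = T" by (simp add: gr_def restrict_def)
lemma indep_restrict[simp]: "indep (restrict M T) X \<longleftrightarrow> indep M X \<and> X \<subseteq> T"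
  by (simp add: indep_def restrict_def)

lemma rank_eq_on:
  assumes "\<And>I. I \<subseteq> X \<Longrightarrow> indep N' I \<longleftrightarrow> indep N I"
  shows "mrank_of N' X = mrank_of N X"
proof -
  have "{card I | I. I \<subseteq> X \<and> indep N' I} = {card I | I. I \<subseteq> X \<and> indep N I}"
    using assms by blast
  then show ?thesis unfolding mrank_of_def by simp
qed

lemma flat_restr:
  assumes N: "matroid N" and N': "matroid N'" and sub: "gr N' \<subseteq> gr N"
    and ind: "\<And>X. indep N' X \<longleftrightarrow> indep N X \<and> X \<subseteq> gr N'"
    and Z: "flat N Z"
  shows "flat N' (Z \<inter> gr N')"
proof -
  let ?T = "gr N'"
  have "mclosure N' (Z \<inter> ?T) \<subseteq> Z \<inter> ?T"
  proof
    fix e assume e: "e \<in> mclosure N' (Z \<inter> ?T)"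
    then have eT: "e \<in> ?T" and eq: "mrank_of N' (insert e (Z \<inter> ?T)) = mrank_of N' (Z \<inter> ?T)"
      unfolding mclosure_def by auto
    have r1: "mrank_of N' (insert e (Z \<inter> ?T)) = mrank_of N (insert e (Z \<inter> ?T))"
      by (rule rank_eq_on) (use ind eT in blast)
    have r2: "mrank_of N' (Z \<inter> ?T) = mrank_of N (Z \<inter> ?T)"
      by (rule rank_eq_on) (use ind in blast)
    have "e \<in> mclosure N (Z \<inter> ?T)" using eq r1 r2 eT sub unfolding mclosure_def by auto
    then have "e \<in> mclosure N Z" using cl_mono[OF N _ ] by blast
    then show "e \<in> Z \<inter> ?T" using Z eT unfolding flat_def by simp
  qed
  moreover have "Z \<inter> ?T \<subseteq> mclosure N' (Z \<inter> ?T)" by (rule cl_incl) blast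
  ultimately show ?thesis unfolding flat_def by blast
qed

lemma codep_cocirc:
  assumes "finite X" "codependent N X" shows "\<exists>C. C \<subseteq> X \<and> cocircuit N C"
  using assms
proof (induction "card X" arbitrary: X rule: less_induct)
  case less
  show ?case
  proof (cases "cocircuit N X")
    case True then show ?thesis by blast
  next
    case False
    then obtain D where D: "D \<subset> X" "codependent N D" using less.prems unfolding cocircuit_def by blast
    have "card D < card X" using psubset_card_mono[OF less.prems(1) D(1)] .
    moreover have "finite D" using D(1) less.prems(1) finite_subset by blast
    ultimately obtain C where "C \<subseteq> D" "cocircuit N C" using less.hyps D(2) by blast
    then show ?thesis using D(1) by blast
  qed
qed

lemma rank_restrict_gr:
  assumes "T \<subseteq> gr M" shows "matroid_rank (restrict M T) = mrank_of M T"
  unfolding matroid_rank_def gr_restrict by (rule rank_eq_on) auto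

lemma restrict_span_round:
  assumes M: "matroid M" and T: "T \<subseteq> gr M" and MT: "matroid (restrict M T)"
    and span: "mclosure M T = gr M" and r: "round (restrict M T)"
  shows "round M"
proof -
  have rk: "matroid_rank (restrict M T) = matroid_rank M"
    using rank_restrict_gr[OF T] rank_cl[OF M T] span unfolding matroid_rank_def by simp
  have bas: "basis M B" if B: "basis (restrict M T) B" for B
  proof -
    have "indep M B" using basis_indep[OF B] by simp
    moreover have "card B = matroid_rank M" using basis_card[OF MT B] rk by simp
    ultimately show ?thesis using card_basis[OF M] by blast
  qed
  have cod: "codependent (restrict M T) (C \<inter> T)" if C: "cocircuit M C" for C
    unfolding codependent_def
  proof (intro conjI allI impI)
    show "C \<inter> T \<subseteq> gr (restrict M T)" by simp
    have meet: "C \<inter> T \<inter> B \<noteq> {}" if B: "basis (restrict M T) B" for B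
    proof -
      have "B \<subseteq> T" using basis_indep[OF B] by simp
      then show ?thesis using cocirc_meets[OF C bas[OF B]] by blast
    qed
    obtain B0 where "basis (restrict M T) B0" using basis_ex[OF MT] by blast
    then show "C \<inter> T \<noteq> {}" using meet by blast
    fix B assume "basis (restrict M T) B"
    then show "C \<inter> T \<inter> B \<noteq> {}" using meet by blast
  qed
  have fT: "finite T" using mat_fin[OF M] T finite_subset by blast
  show ?thesis unfolding round_def
  proof
    assume "\<exists>C D. cocircuit M C \<and> cocircuit M D \<and> C \<inter> D = {}"
    then obtain C D where C: "cocircuit M C" and D: "cocircuit M D" and CD: "C \<inter> D = {}" by blast
    obtain C0 where C0: "C0 \<subseteq> C \<inter> T" "cocircuit (restrict M T) C0"
      using codep_cocirc[OF _ cod[OF C]] fT by blast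
    obtain D0 where D0: "D0 \<subseteq> D \<inter> T" "cocircuit (restrict M T) D0"
      using codep_cocirc[OF _ cod[OF D]] fT by blast
    have "C0 \<inter> D0 = {}" using C0 D0 CD by blast
    then show False using r C0 D0 unfolding round_def by blast
  qed
qed

context field
begin

lemma inv_facts: "a \<in> carrier R \<Longrightarrow> a \<noteq> \<zero> \<Longrightarrow> inv a \<in> carrier R \<and> inv a \<otimes> a = \<one>"
  using field_Units Units_inv_closed Units_l_inv by auto

lemma sum_zero_neg:
  assumes "x \<in> carrier R" "y \<in> carrier R" "x \<oplus> y = \<zero>" shows "x = \<ominus> y"
proof -
  have "x = (x \<oplus> y) \<oplus> \<ominus> y" using assms(1,2) by algebra
  then show ?thesis using assms by simp
qed

lemma pv_carr: "v \<in> pg_vectors R d \<Longrightarrow> v i \<in> carrier R"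
  unfolding pg_vectors_def by (cases "i < d") auto

lemma pg_zero_app[simp]: "pg_zero R i = \<zero>" by (simp add: pg_zero_def)

lemma nonzero_coord: "v \<noteq> pg_zero R \<Longrightarrow> \<exists>j. v j \<noteq> \<zero>"
  unfolding pg_zero_def by auto

lemma line_mem: "w \<in> pg_line R v \<longleftrightarrow> (\<exists>a\<in>carrier R. w = (\<lambda>i. a \<otimes> v i))"
  unfolding pg_line_def by auto

lemma scal_vec: "v \<in> pg_vectors R d \<Longrightarrow> a \<in> carrier R \<Longrightarrow> (\<lambda>i. a \<otimes> v i) \<in> pg_vectors R d"
  unfolding pg_vectors_def by auto

lemma line_vecs: "v \<in> pg_vectors R d \<Longrightarrow> w \<in> pg_line R v \<Longrightarrow> w \<in> pg_vectors R d"
  using line_mem scal_vec by auto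

lemma line_self: "v \<in> pg_vectors R d \<Longrightarrow> v \<in> pg_line R v"
  unfolding line_mem
proof
  assume "v \<in> pg_vectors R d"
  then show "v = (\<lambda>i. \<one> \<otimes> v i)" using pv_carr by auto
qed simp

lemma line_zero: "v \<in> pg_vectors R d \<Longrightarrow> pg_zero R \<in> pg_line R v"
  unfolding line_mem
proof
  assume "v \<in> pg_vectors R d"
  then show "pg_zero R = (\<lambda>i. \<zero> \<otimes> v i)" using pv_carr by (auto simp: pg_zero_def)
qed simp

lemma line_scale:
  assumes v: "v \<in> pg_vectors R d" and c: "c \<in> carrier R" "c \<noteq> \<zero>"
  shows "pg_line R (\<lambda>i. c \<otimes> v i) = pg_line R v"
proof
  show "pg_line R (\<lambda>i. c \<otimes> v i) \<subseteq> pg_line R v"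
  proof
    fix x assume "x \<in> pg_line R (\<lambda>i. c \<otimes> v i)"
    then obtain a where a: "a \<in> carrier R" "x = (\<lambda>i. a \<otimes> (c \<otimes> v i))" unfolding line_mem by blast
    then have "x = (\<lambda>i. (a \<otimes> c) \<otimes> v i)" using c pv_carr[OF v] by (simp add: m_assoc)
    then show "x \<in> pg_line R v" unfolding line_mem using a c by blast
  qed
  show "pg_line R v \<subseteq> pg_line R (\<lambda>i. c \<otimes> v i)"
  proof
    fix x assume "x \<in> pg_line R v"
    then obtain a where a: "a \<in> carrier R" "x = (\<lambda>i. a \<otimes> v i)" unfolding line_mem by blast
    have ic: "inv c \<in> carrier R" "inv c \<otimes> c = \<one>" using inv_facts c by auto
    have "x = (\<lambda>i. (a \<otimes> inv c) \<otimes> (c \<otimes> v i))"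
    proof
      fix i
      have vi: "v i \<in> carrier R" using pv_carr[OF v] .
      have "(a \<otimes> inv c) \<otimes> (c \<otimes> v i) = a \<otimes> ((inv c \<otimes> c) \<otimes> v i)"
        using a(1) ic(1) c(1) vi by algebra
      moreover have "(inv c \<otimes> c) \<otimes> v i = v i" by (subst ic(2)) (simp add: vi)
      ultimately have "(a \<otimes> inv c) \<otimes> (c \<otimes> v i) = a \<otimes> v i" by (simp only:)
      then show "x i = (a \<otimes> inv c) \<otimes> (c \<otimes> v i)" using a by simp
    qed
    then show "x \<in> pg_line R (\<lambda>i. c \<otimes> v i)" unfolding line_mem using a ic by blast
  qed
qed

lemma line_eq_mult:
  assumes u: "u \<in> pg_vectors R d" and v: "v \<noteq> pg_zero R" and k: "k \<in> carrier R"
    and eq: "v = (\<lambda>i. k \<otimes> u i)"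
  shows "pg_line R v = pg_line R u"
proof -
  have "k \<noteq> \<zero>"
  proof
    assume "k = \<zero>"
    then have "v = pg_zero R" using eq pv_carr[OF u] by (auto simp: pg_zero_def)
    then show False using v by simp
  qed
  then show ?thesis using line_scale[OF u k] eq by simp
qed

lemma line_eq_of_mem:
  assumes v: "v \<in> pg_vectors R d" and w: "w \<in> pg_line R v" "w \<noteq> pg_zero R"
  shows "pg_line R w = pg_line R v"
  using w line_eq_mult[OF v w(2)] unfolding line_mem by blast

lemma point_rep: "p \<in> pg_points R d \<Longrightarrow> \<exists>v. v \<in> pg_vectors R d \<and> v \<noteq> pg_zero R \<and> p = pg_line R v"
  unfolding pg_points_def by blast

lemma finsum2:
  assumes "a \<noteq> b" "f a \<in> carrier R" "f b \<in> carrier R"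
  shows "finsum R f {a, b} = f a \<oplus> f b"
  using assms by (simp add: finsum_insert finsum_empty Pi_def)

lemma finsum3:
  assumes "a \<noteq> b" "a \<noteq> c" "b \<noteq> c" "f a \<in> carrier R" "f b \<in> carrier R" "f c \<in> carrier R"
  shows "finsum R f {a, b, c} = f a \<oplus> (f b \<oplus> f c)"
  using assms by (simp add: finsum_insert finsum_empty Pi_def)

lemma two_indep:
  assumes p: "p \<in> pg_points R d" and q: "q \<in> pg_points R d" and pq: "p \<noteq> q"
  shows "pg_indep R d {p, q}"
  unfolding pg_indep_def
proof (intro conjI allI impI)
  show "{p, q} \<subseteq> pg_points R d" using p q by blast
  obtain u where u: "u \<in> pg_vectors R d" "u \<noteq> pg_zero R" "p = pg_line R u" using point_rep[OF p] by blast
  obtain v where v: "v \<in> pg_vectors R d" "v \<noteq> pg_zero R" "q = pg_line R v" using point_rep[OF q] by blast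
  fix c assume A: "(\<forall>t\<in>{p, q}. c t \<in> t) \<and> (\<lambda>i. finsum R (\<lambda>t. c t i) {p, q}) = pg_zero R"
  then have A1: "\<forall>t\<in>{p, q}. c t \<in> t" and A2: "(\<lambda>i. finsum R (\<lambda>t. c t i) {p, q}) = pg_zero R"
    by simp_all
  have "c p \<in> pg_line R u" using A1 u(3) by simp
  then obtain a where a: "a \<in> carrier R" "c p = (\<lambda>i. a \<otimes> u i)" unfolding line_mem by blast
  have "c q \<in> pg_line R v" using A1 v(3) by simp
  then obtain b where b: "b \<in> carrier R" "c q = (\<lambda>i. b \<otimes> v i)" unfolding line_mem by blast
  have uc: "u i \<in> carrier R" and vc: "v i \<in> carrier R" for i using pv_carr u v by auto
  have S: "a \<otimes> u i \<oplus> b \<otimes> v i = \<zero>" for i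
  proof -
    have "finsum R (\<lambda>t. c t i) {p, q} = \<zero>" using fun_cong[OF A2, of i] by simp
    moreover have "finsum R (\<lambda>t. c t i) {p, q} = c p i \<oplus> c q i"
      by (rule finsum2[OF pq]) (simp_all add: a b uc vc)
    ultimately show ?thesis using a b by simp
  qed
  show "\<forall>t\<in>{p, q}. c t = pg_zero R"
  proof (cases "a = \<zero>")
    case True
    have "b \<otimes> v i = \<zero>" for i using S[of i] uc[of i] vc[of i] b(1) True by simp
    then have "c q = pg_zero R" using b(2) by (simp add: pg_zero_def)
    moreover have "c p = pg_zero R" using a(2) True uc by (simp add: pg_zero_def)
    ultimately show ?thesis by simp
  next
    case False
    obtain ia where ia: "ia \<in> carrier R" "ia \<otimes> a = \<one>" using inv_facts[OF a(1) False] by blast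
    define k where "k = \<ominus> (ia \<otimes> b)"
    have kc: "k \<in> carrier R" unfolding k_def using ia b by simp
    have ui: "u i = k \<otimes> v i" for i
    proof -
      have e2: "a \<otimes> u i = \<ominus> (b \<otimes> v i)" using sum_zero_neg S[of i] a b uc[of i] vc[of i] by simp
      have "ia \<otimes> (a \<otimes> u i) = (ia \<otimes> a) \<otimes> u i" using ia(1) a(1) uc[of i] by algebra
      moreover have "(ia \<otimes> a) \<otimes> u i = u i" by (subst ia(2)) (simp add: uc)
      ultimately have e1: "ia \<otimes> (a \<otimes> u i) = u i" by (simp only:)
      have "ia \<otimes> \<ominus> (b \<otimes> v i) = k \<otimes> v i" unfolding k_def using ia(1) b(1) vc[of i] by algebra
      then show ?thesis using e1 e2 by simp
    qed
    then have "u = (\<lambda>i. k \<otimes> v i)" by auto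
    then have "pg_line R u = pg_line R v" using line_eq_mult[OF v(1) u(2) kc] by simp
    then show ?thesis using pq u v by simp
  qed
qed

lemma third_point:
  assumes p: "p \<in> pg_points R d" and q: "q \<in> pg_points R d" and pq: "p \<noteq> q"
  shows "\<exists>z\<in>pg_points R d. z \<noteq> p \<and> z \<noteq> q \<and> \<not> pg_indep R d {p, q, z}"
proof -
  obtain u where u: "u \<in> pg_vectors R d" "u \<noteq> pg_zero R" "p = pg_line R u" using point_rep[OF p] by blast
  obtain v where v: "v \<in> pg_vectors R d" "v \<noteq> pg_zero R" "q = pg_line R v" using point_rep[OF q] by blast
  have uc: "u i \<in> carrier R" and vc: "v i \<in> carrier R" for i using pv_carr u v by auto
  define w where "w = (\<lambda>i. u i \<oplus> v i)"
  have wc: "w i \<in> carrier R" for i unfolding w_def using uc vc by simp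
  have wv: "w \<in> pg_vectors R d" using u v unfolding pg_vectors_def w_def by auto
  have wz: "w \<noteq> pg_zero R"
  proof
    assume "w = pg_zero R"
    then have "w i = \<zero>" for i by simp
    then have "v i = (\<ominus> \<one>) \<otimes> u i" for i
    proof -
      have "v i = (\<ominus> \<one>) \<otimes> u i \<oplus> (u i \<oplus> v i)" using uc[of i] vc[of i] by algebra
      then show ?thesis using \<open>w i = \<zero>\<close> uc[of i] unfolding w_def by simp
    qed
    then have "v = (\<lambda>i. (\<ominus> \<one>) \<otimes> u i)" by auto
    then have "pg_line R v = pg_line R u" using line_eq_mult[OF u(1) v(2)] by simp
    then show False using pq u v by simp
  qed
  define z where "z = pg_line R w"
  have zP: "z \<in> pg_points R d" unfolding z_def pg_points_def using wv wz by blast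
  have wz_in: "w \<in> z" unfolding z_def using line_self[OF wv] .
  have zp: "z \<noteq> p"
  proof
    assume "z = p"
    then have "w \<in> pg_line R u" using wz_in u(3) by simp
    then obtain a where a: "a \<in> carrier R" "w = (\<lambda>i. a \<otimes> u i)" unfolding line_mem by blast
    have "v i = (a \<ominus> \<one>) \<otimes> u i" for i
    proof -
      have h: "u i \<oplus> v i = a \<otimes> u i" using a fun_cong[OF a(2), of i] unfolding w_def by simp
      have "v i = (a \<ominus> \<one>) \<otimes> u i \<oplus> ((u i \<oplus> v i) \<oplus> \<ominus> (a \<otimes> u i))"
        using a(1) uc[of i] vc[of i] by algebra
      then show ?thesis using h a(1) uc[of i] by (simp add: r_neg)
    qed
    then have "v = (\<lambda>i. (a \<ominus> \<one>) \<otimes> u i)" by auto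
    then have "pg_line R v = pg_line R u" using line_eq_mult[OF u(1) v(2)] a by simp
    then show False using pq u v by simp
  qed
  have zq: "z \<noteq> q"
  proof
    assume "z = q"
    then have "w \<in> pg_line R v" using wz_in v(3) by simp
    then obtain a where a: "a \<in> carrier R" "w = (\<lambda>i. a \<otimes> v i)" unfolding line_mem by blast
    have "u i = (a \<ominus> \<one>) \<otimes> v i" for i
    proof -
      have h: "u i \<oplus> v i = a \<otimes> v i" using a fun_cong[OF a(2), of i] unfolding w_def by simp
      have "u i = (a \<ominus> \<one>) \<otimes> v i \<oplus> ((u i \<oplus> v i) \<oplus> \<ominus> (a \<otimes> v i))"
        using a(1) uc[of i] vc[of i] by algebra
      then show ?thesis using h a(1) vc[of i] by (simp add: r_neg)
    qed
    then have "u = (\<lambda>i. (a \<ominus> \<one>) \<otimes> v i)" by auto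
    then have "pg_line R u = pg_line R v" using line_eq_mult[OF v(1) u(2)] a by simp
    then show False using pq u v by simp
  qed
  define c where "c = (\<lambda>t. if t = p then u else if t = q then v else (\<lambda>i. \<ominus> w i))"
  have "\<not> pg_indep R d {p, q, z}"
    unfolding pg_indep_def
  proof
    assume A: "{p, q, z} \<subseteq> pg_points R d \<and>
      (\<forall>c. (\<forall>t\<in>{p, q, z}. c t \<in> t) \<and> (\<lambda>i. finsum R (\<lambda>t. c t i) {p, q, z}) = pg_zero R \<longrightarrow>
           (\<forall>t\<in>{p, q, z}. c t = pg_zero R))"
    have cp: "c p = u" "c q = v" "c z = (\<lambda>i. \<ominus> w i)" unfolding c_def using pq zp zq by auto
    have mem: "\<forall>t\<in>{p, q, z}. c t \<in> t"
    proof -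
      have "c p \<in> p" using cp line_self[OF u(1)] u by simp
      moreover have "c q \<in> q" using cp line_self[OF v(1)] v by simp
      moreover have "c z \<in> z"
      proof -
        have "(\<lambda>i. \<ominus> w i) = (\<lambda>i. (\<ominus> \<one>) \<otimes> w i)" using wc by (auto simp: l_minus)
        then have "c z = (\<lambda>i. (\<ominus> \<one>) \<otimes> w i)" using cp by simp
        moreover have "\<ominus> \<one> \<in> carrier R" by simp
        ultimately show ?thesis unfolding z_def line_mem by blast
      qed
      ultimately show ?thesis by blast
    qed
    have sum: "(\<lambda>i. finsum R (\<lambda>t. c t i) {p, q, z}) = pg_zero R"
    proof
      fix i
      have "finsum R (\<lambda>t. c t i) {p, q, z} = u i \<oplus> (v i \<oplus> \<ominus> w i)"
        using finsum3[of p q z "\<lambda>t. c t i", OF pq zp[symmetric] zq[symmetric]] cp uc vc wc by simp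
      also have "\<dots> = \<zero>" unfolding w_def using uc[of i] vc[of i] by algebra
      finally show "finsum R (\<lambda>t. c t i) {p, q, z} = pg_zero R i" by simp
    qed
    from A have H: "\<forall>c. (\<forall>t\<in>{p, q, z}. c t \<in> t) \<and> (\<lambda>i. finsum R (\<lambda>t. c t i) {p, q, z}) = pg_zero R \<longrightarrow>
           (\<forall>t\<in>{p, q, z}. c t = pg_zero R)" by (rule conjunct2)
    have "c p = pg_zero R" using H[rule_format, OF conjI[OF mem sum], of p] by simp
    then show False using cp u by simp
  qed
  then show ?thesis using zP zp zq by blast
qed

end

definition ev :: "('b, 'm) ring_scheme \<Rightarrow> nat \<Rightarrow> nat \<Rightarrow> 'b" where
  "ev R j = (\<lambda>i. if i = j then \<one>\<^bsub>R\<^esub> else \<zero>\<^bsub>R\<^esub>)"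

definition Ebas :: "('b, 'm) ring_scheme \<Rightarrow> nat \<Rightarrow> (nat \<Rightarrow> 'b) set set" where
  "Ebas R d = (\<lambda>j. pg_line R (ev R j)) ` {..<d}"

context field
begin

lemma ev_carr: "ev R j i \<in> carrier R" by (simp add: ev_def)

lemma ev_vec: "j < d \<Longrightarrow> ev R j \<in> pg_vectors R d" by (auto simp: ev_def pg_vectors_def)

lemma ev_nz: "ev R j \<noteq> pg_zero R"
proof
  assume "ev R j = pg_zero R"
  then have "ev R j j = \<zero>" by simp
  then show False by (simp add: ev_def)
qed

lemma mem_line_ev:
  assumes "x \<in> pg_line R (ev R j)"
  shows "x j \<in> carrier R" "x = (\<lambda>i. if i = j then x j else \<zero>)"
proof -
  obtain a where a: "a \<in> carrier R" "x = (\<lambda>i. a \<otimes> ev R j i)" using assms unfolding line_mem by blast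
  then have xj: "x j = a" by (simp add: ev_def)
  then show "x j \<in> carrier R" using a by simp
  show "x = (\<lambda>i. if i = j then x j else \<zero>)"
  proof
    fix i show "x i = (if i = j then x j else \<zero>)" using a xj by (simp add: ev_def)
  qed
qed

lemma ev_in_line: "ev R j \<in> pg_line R (ev R j)"
  unfolding line_mem
proof
  show "ev R j = (\<lambda>i. \<one> \<otimes> ev R j i)" using ev_carr by simp
qed simp

lemma line_ev_inj: assumes "pg_line R (ev R j) = pg_line R (ev R k)" shows "j = k"
proof (rule ccontr)
  assume jk: "j \<noteq> k"
  have "ev R j \<in> pg_line R (ev R k)" using ev_in_line[of j] assms by simp
  then have "ev R j = (\<lambda>i. if i = k then ev R j k else \<zero>)" by (rule mem_line_ev)
  then have "ev R j j = \<zero>" using jk by (metis (mono_tags))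
  then show False by (simp add: ev_def)
qed

lemma line_ev_inj_iff: "pg_line R (ev R j) = pg_line R (ev R k) \<longleftrightarrow> j = k"
  using line_ev_inj by blast

lemma E_points: "Ebas R d \<subseteq> pg_points R d"
  unfolding Ebas_def pg_points_def using ev_vec ev_nz by blast

lemma E_inj: "inj_on (\<lambda>j. pg_line R (ev R j)) A"
  unfolding inj_on_def using line_ev_inj by blast

lemma E_card: "card (Ebas R d) = d"
  unfolding Ebas_def using card_image[OF E_inj] by simp

lemma E_fin: "finite (Ebas R d)" unfolding Ebas_def by simp

lemma point_carr: assumes "t \<in> pg_points R d" "x \<in> t" shows "x i \<in> carrier R"
proof -
  obtain v where v: "v \<in> pg_vectors R d" "t = pg_line R v" using point_rep[OF assms(1)] by blast
  then have "x \<in> pg_vectors R d" using line_vecs assms(2) by simp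
  then show ?thesis by (rule pv_carr)
qed

lemma E_indep: "pg_indep R d (Ebas R d)"
  unfolding pg_indep_def
proof (intro conjI allI impI)
  show "Ebas R d \<subseteq> pg_points R d" by (rule E_points)
  fix c assume A: "(\<forall>t\<in>Ebas R d. c t \<in> t) \<and> (\<lambda>i. finsum R (\<lambda>t. c t i) (Ebas R d)) = pg_zero R"
  then have A1: "\<forall>t\<in>Ebas R d. c t \<in> t" and A2: "(\<lambda>i. finsum R (\<lambda>t. c t i) (Ebas R d)) = pg_zero R"
    by simp_all
  define t where "t = (\<lambda>j. pg_line R (ev R j))"
  have tE: "j < d \<Longrightarrow> t j \<in> Ebas R d" for j unfolding t_def Ebas_def by simp
  have ct: "c (t j) = (\<lambda>i. if i = j then c (t j) j else \<zero>) \<and> c (t j) j \<in> carrier R" if j: "j < d" for j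
  proof -
    have "c (t j) \<in> t j" using bspec[OF A1 tE[OF j]] .
    then have "c (t j) \<in> pg_line R (ev R j)" unfolding t_def .
    then show ?thesis using mem_line_ev by blast
  qed
  have cc: "\<forall>s\<in>Ebas R d. c s i \<in> carrier R" for i
  proof
    fix s assume s: "s \<in> Ebas R d"
    then have "s \<in> pg_points R d" using E_points by blast
    then show "c s i \<in> carrier R" using point_carr bspec[OF A1 s] by blast
  qed
  have z: "c (t i) i = \<zero>" if i: "i < d" for i
  proof -
    have "finsum R (\<lambda>s. c s i) (Ebas R d) = \<zero>" using fun_cong[OF A2, of i] by simp
    moreover have "finsum R (\<lambda>s. c s i) (Ebas R d) = finsum R (\<lambda>j. c (t j) i) {..<d}"
      unfolding Ebas_def t_def by (rule finsum_reindex) (use cc E_inj in \<open>auto simp: Ebas_def\<close>)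
    moreover have "finsum R (\<lambda>j. c (t j) i) {..<d} = finsum R (\<lambda>j. if i = j then c (t j) j else \<zero>) {..<d}"
    proof (rule finsum_cong')
      show "(\<lambda>j. if i = j then c (t j) j else \<zero>) \<in> {..<d} \<rightarrow> carrier R" using ct by auto
      fix j assume "j \<in> {..<d}"
      then have eq: "c (t j) = (\<lambda>i. if i = j then c (t j) j else \<zero>)" using ct[of j] by simp
      show "c (t j) i = (if i = j then c (t j) j else \<zero>)" using fun_cong[OF eq, of i] by (simp only:)
    qed simp
    moreover have "finsum R (\<lambda>j. if i = j then c (t j) j else \<zero>) {..<d} = c (t i) i"
      by (rule finsum_singleton) (use i ct in auto)
    ultimately show ?thesis by simp
  qed
  show "\<forall>s\<in>Ebas R d. c s = pg_zero R"
  proof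
    fix s assume "s \<in> Ebas R d"
    then obtain j where j: "j < d" "s = t j" unfolding Ebas_def t_def by blast
    show "c s = pg_zero R"
    proof
      fix i
      have eq: "c (t j) = (\<lambda>i. if i = j then c (t j) j else \<zero>)" using ct[OF j(1)] by blast
      have "c (t j) i = (if i = j then c (t j) j else \<zero>)" using fun_cong[OF eq, of i] by (simp only:)
      then have "c (t j) i = (if i = j then \<zero> else \<zero>)" using z[OF j(1)] by simp
      then show "c s i = pg_zero R i" using j(2) by simp
    qed
  qed
qed

lemma E_span:
  assumes p: "p \<in> pg_points R d" and pE: "p \<notin> Ebas R d"
  shows "\<not> pg_indep R d (insert p (Ebas R d))"
proof
  assume I: "pg_indep R d (insert p (Ebas R d))"
  obtain v where v: "v \<in> pg_vectors R d" "v \<noteq> pg_zero R" "p = pg_line R v" using point_rep[OF p] by blast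
  have vc: "v i \<in> carrier R" for i using pv_carr[OF v(1)] .
  define t where "t = (\<lambda>j. pg_line R (ev R j))"
  define c where "c = (\<lambda>s. if s = p then (\<lambda>i. \<ominus> v i) else (\<lambda>i. if s = t i then v i else \<zero>))"
  have tE: "j < d \<Longrightarrow> t j \<in> Ebas R d" for j unfolding t_def Ebas_def by simp
  have ctj: "c (t j) = (\<lambda>i. if i = j then v j else \<zero>)" if j: "j < d" for j
  proof -
    have "t j \<noteq> p" using tE[OF j] pE by blast
    show ?thesis
    proof
      fix i
      have "(t j = t i) = (j = i)" unfolding t_def by (rule line_ev_inj_iff)
      then show "c (t j) i = (if i = j then v j else \<zero>)" unfolding c_def using \<open>t j \<noteq> p\<close> by auto
    qed
  qed
  have mem: "\<forall>s\<in>insert p (Ebas R d). c s \<in> s"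
  proof
    fix s assume s: "s \<in> insert p (Ebas R d)"
    show "c s \<in> s"
    proof (cases "s = p")
      case True
      have "c s = (\<lambda>i. (\<ominus> \<one>) \<otimes> v i)" using True vc by (auto simp: c_def l_minus)
      moreover have "\<ominus> \<one> \<in> carrier R" by simp
      ultimately have "c s \<in> pg_line R v" unfolding line_mem by blast
      then show ?thesis using True v(3) by simp
    next
      case False
      then obtain j where j: "j < d" "s = t j" using s unfolding Ebas_def t_def by blast
      have "c s = (\<lambda>i. v j \<otimes> ev R j i)" using ctj[OF j(1)] j(2) vc by (auto simp: ev_def)
      then have "c s \<in> pg_line R (ev R j)" using vc[of j] unfolding line_mem by blast
      then show ?thesis using j(2) unfolding t_def by simp
    qed
  qed
  have cc: "\<forall>s\<in>insert p (Ebas R d). c s i \<in> carrier R" for i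
  proof
    fix s assume s: "s \<in> insert p (Ebas R d)"
    then have "s \<in> pg_points R d" using E_points p by blast
    then show "c s i \<in> carrier R" using point_carr bspec[OF mem s] by blast
  qed
  have sum: "(\<lambda>i. finsum R (\<lambda>s. c s i) (insert p (Ebas R d))) = pg_zero R"
  proof
    fix i
    have "finsum R (\<lambda>s. c s i) (insert p (Ebas R d)) = c p i \<oplus> finsum R (\<lambda>s. c s i) (Ebas R d)"
      by (rule finsum_insert) (use E_fin pE cc in auto)
    moreover have "finsum R (\<lambda>s. c s i) (Ebas R d) = finsum R (\<lambda>j. c (t j) i) {..<d}"
      unfolding Ebas_def t_def by (rule finsum_reindex) (use cc E_inj in \<open>auto simp: Ebas_def\<close>)
    moreover have "finsum R (\<lambda>j. c (t j) i) {..<d} = v i"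
    proof (cases "i < d")
      case True
      have "finsum R (\<lambda>j. c (t j) i) {..<d} = finsum R (\<lambda>j. if i = j then v j else \<zero>) {..<d}"
        by (rule finsum_cong') (use ctj vc in auto)
      also have "\<dots> = v i" by (rule finsum_singleton) (use True vc in auto)
      finally show ?thesis .
    next
      case False
      have "finsum R (\<lambda>j. c (t j) i) {..<d} = finsum R (\<lambda>j. \<zero>) {..<d}"
        by (rule finsum_cong') (use ctj False in auto)
      also have "\<dots> = \<zero>" by simp
      finally show ?thesis using False v(1) unfolding pg_vectors_def by simp
    qed
    moreover have "c p i = \<ominus> v i" unfolding c_def by simp
    ultimately show "finsum R (\<lambda>s. c s i) (insert p (Ebas R d)) = pg_zero R i"
      using vc[of i] by (simp add: l_neg)
  qed
  have H: "\<forall>c. (\<forall>s\<in>insert p (Ebas R d). c s \<in> s) \<and>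
        (\<lambda>i. finsum R (\<lambda>s. c s i) (insert p (Ebas R d))) = pg_zero R \<longrightarrow>
        (\<forall>s\<in>insert p (Ebas R d). c s = pg_zero R)"
    using I unfolding pg_indep_def by (rule conjunct2)
  have "c p = pg_zero R" using H[rule_format, OF conjI[OF mem sum], of p] by simp
  then have cpz: "(\<lambda>i. \<ominus> v i) = pg_zero R" unfolding c_def by simp
  have "\<ominus> v i = \<zero>" for i using fun_cong[OF cpz, of i] by simp
  then have "v i = \<zero>" for i using vc[of i] by (metis minus_minus minus_zero)
  then show False using v(2) by (auto simp: pg_zero_def)
qed

end

lemma gr_PG[simp]: "gr (PG R d) = pg_points R d" by (simp add: gr_def PG_def)
lemma indep_PG[simp]: "indep (PG R d) = pg_indep R d" by (simp add: indep_def PG_def)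

lemma PG_rank:
  assumes F: "field R" and M: "matroid (PG R d)"
  shows "matroid_rank (PG R d) = d"
proof -
  have "card (Ebas R d) = mrank_of (PG R d) (gr (PG R d))"
    by (rule rank_maxcard[OF M]) (use field.E_points[OF F] field.E_indep[OF F] field.E_span[OF F] in auto)
  then show ?thesis using field.E_card[OF F] unfolding matroid_rank_def by simp
qed

lemma PG_round:
  assumes F: "field R" and M: "matroid (PG R d)"
  shows "round (PG R d)"
  by (rule round_crit[OF M]) (use field.two_indep[OF F] field.third_point[OF F] in auto)

context field
begin

lemma card_vecs:
  assumes fin: "finite (carrier R)"
  shows "card (pg_vectors R d) = card (carrier R) ^ d \<and> finite (pg_vectors R d)"
proof -
  define h where "h = (\<lambda>v::nat \<Rightarrow> 'a. (\<lambda>i. if i < d then v i else undefined))"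
  have inj: "inj_on h (pg_vectors R d)"
  proof (rule inj_onI)
    fix v w assume v: "v \<in> pg_vectors R d" and w: "w \<in> pg_vectors R d" and e: "h v = h w"
    show "v = w"
    proof
      fix i show "v i = w i"
      proof (cases "i < d")
        case True then show ?thesis using fun_cong[OF e, of i] unfolding h_def by simp
      next
        case False then show ?thesis using v w unfolding pg_vectors_def by simp
      qed
    qed
  qed
  have im: "h ` pg_vectors R d = PiE {..<d} (\<lambda>_. carrier R)"
  proof
    show "h ` pg_vectors R d \<subseteq> PiE {..<d} (\<lambda>_. carrier R)"
      unfolding h_def pg_vectors_def by (auto simp: PiE_iff extensional_def split: if_splits)
    show "PiE {..<d} (\<lambda>_. carrier R) \<subseteq> h ` pg_vectors R d"
    proof
      fix f assume f: "f \<in> PiE {..<d} (\<lambda>_. carrier R)"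
      define v where "v = (\<lambda>i. if i < d then f i else \<zero>)"
      have "v \<in> pg_vectors R d" using f unfolding v_def pg_vectors_def by (auto simp: PiE_iff)
      moreover have "h v = f"
      proof
        fix i show "h v i = f i" using f unfolding h_def v_def by (auto simp: PiE_iff extensional_def)
      qed
      ultimately show "f \<in> h ` pg_vectors R d" by blast
    qed
  qed
  have "card (PiE {..<d} (\<lambda>_. carrier R)) = card (carrier R) ^ d" by (simp add: card_PiE)
  moreover have "finite (PiE {..<d} (\<lambda>_. carrier R))" using fin by (simp add: finite_PiE)
  moreover have "card (h ` pg_vectors R d) = card (pg_vectors R d)" using card_image[OF inj] .
  moreover have "finite (h ` pg_vectors R d) = finite (pg_vectors R d)" using finite_image_iff[OF inj] .
  ultimately show ?thesis using im by simp
qed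

lemma card_line:
  assumes v: "v \<in> pg_vectors R d" "v \<noteq> pg_zero R"
  shows "card (pg_line R v - {pg_zero R}) = card (carrier R) - 1"
proof -
  obtain j where j: "v j \<noteq> \<zero>" using nonzero_coord[OF v(2)] by blast
  have vc: "v i \<in> carrier R" for i using pv_carr[OF v(1)] .
  define h where "h = (\<lambda>a. (\<lambda>i. a \<otimes> v i))"
  have inj: "inj_on h (carrier R - {\<zero>})"
  proof (rule inj_onI)
    fix a b assume a: "a \<in> carrier R - {\<zero>}" and b: "b \<in> carrier R - {\<zero>}" and e: "h a = h b"
    have "a \<otimes> v j = b \<otimes> v j" using fun_cong[OF e, of j] unfolding h_def by simp
    moreover have "a \<in> carrier R" "b \<in> carrier R" using a b by auto
    ultimately show "a = b" using m_rcancel[OF j vc[of j]] by simp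
  qed
  have im: "h ` (carrier R - {\<zero>}) = pg_line R v - {pg_zero R}"
  proof
    show "h ` (carrier R - {\<zero>}) \<subseteq> pg_line R v - {pg_zero R}"
    proof
      fix x assume "x \<in> h ` (carrier R - {\<zero>})"
      then obtain a where a: "a \<in> carrier R" "a \<noteq> \<zero>" "x = h a" by blast
      have "x = (\<lambda>i. a \<otimes> v i)" using a(3) unfolding h_def by simp
      then have "x \<in> pg_line R v" unfolding line_mem using a(1) by blast
      moreover have "x \<noteq> pg_zero R"
      proof
        assume "x = pg_zero R"
        then have hz: "(\<lambda>i. a \<otimes> v i) = pg_zero R" using a(3) unfolding h_def by simp
        have "a \<otimes> v j = \<zero>" using fun_cong[OF hz, of j] by simp
        then show False using a j vc[of j] integral_iff[of a "v j"] by simp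
      qed
      ultimately show "x \<in> pg_line R v - {pg_zero R}" by blast
    qed
    show "pg_line R v - {pg_zero R} \<subseteq> h ` (carrier R - {\<zero>})"
    proof
      fix x assume x: "x \<in> pg_line R v - {pg_zero R}"
      then have "x \<in> pg_line R v" by blast
      then obtain a where a: "a \<in> carrier R" "x = (\<lambda>i. a \<otimes> v i)" unfolding line_mem by blast
      have "a \<noteq> \<zero>"
      proof
        assume "a = \<zero>"
        have "x = pg_zero R"
        proof
          fix i
          have "x i = \<zero> \<otimes> v i" using a(2) \<open>a = \<zero>\<close> by simp
          then show "x i = pg_zero R i" using vc[of i] by simp
        qed
        then show False using x by blast
      qed
      then have "a \<in> carrier R - {\<zero>}" using a(1) by blast
      then have "h a \<in> h ` (carrier R - {\<zero>})" by (rule imageI)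
      then show "x \<in> h ` (carrier R - {\<zero>})" using a(2) unfolding h_def by simp
    qed
  qed
  have "card (pg_line R v - {pg_zero R}) = card (carrier R - {\<zero>})" using card_image[OF inj] im by simp
  then show ?thesis using card_Diff_singleton[of "\<zero>" "carrier R"] by simp
qed

lemma count_points:
  assumes fin: "finite (carrier R)"
  shows "card (pg_points R d) * (card (carrier R) - 1) = card (carrier R) ^ d - 1"
proof -
  let ?z = "pg_zero R"
  let ?C = "(\<lambda>p. p - {?z}) ` pg_points R d"
  have fV: "finite (pg_vectors R d)" and cV: "card (pg_vectors R d) = card (carrier R) ^ d"
    using card_vecs[OF fin] by auto
  have zV: "?z \<in> pg_vectors R d" unfolding pg_vectors_def by simp
  have Pim: "pg_points R d = (\<lambda>v. pg_line R v) ` {v \<in> pg_vectors R d. v \<noteq> ?z}"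
    unfolding pg_points_def by blast
  have fP: "finite (pg_points R d)" unfolding Pim using fV by simp
  have U: "\<Union>?C = pg_vectors R d - {?z}"
  proof
    show "\<Union>?C \<subseteq> pg_vectors R d - {?z}"
    proof
      fix x assume "x \<in> \<Union>?C"
      then obtain p where p: "p \<in> pg_points R d" "x \<in> p" "x \<noteq> ?z" by blast
      obtain v where v: "v \<in> pg_vectors R d" "p = pg_line R v" using point_rep[OF p(1)] by blast
      show "x \<in> pg_vectors R d - {?z}" using line_vecs[OF v(1)] p v by blast
    qed
    show "pg_vectors R d - {?z} \<subseteq> \<Union>?C"
    proof
      fix x assume x: "x \<in> pg_vectors R d - {?z}"
      then have "pg_line R x \<in> pg_points R d" unfolding pg_points_def by blast
      moreover have "x \<in> pg_line R x - {?z}" using line_self x by blast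
      ultimately show "x \<in> \<Union>?C" by blast
    qed
  qed
  have cards: "\<forall>c\<in>?C. card c = card (carrier R) - 1"
  proof
    fix c assume "c \<in> ?C"
    then obtain p where p: "p \<in> pg_points R d" "c = p - {?z}" by blast
    obtain v where v: "v \<in> pg_vectors R d" "v \<noteq> ?z" "p = pg_line R v" using point_rep[OF p(1)] by blast
    show "card c = card (carrier R) - 1" using card_line[OF v(1,2)] p v by simp
  qed
  have same: "p1 = p2" if p1: "p1 \<in> pg_points R d" and p2: "p2 \<in> pg_points R d"
    and x: "x \<in> p1" "x \<in> p2" "x \<noteq> ?z" for p1 p2 x
  proof -
    obtain u where u: "u \<in> pg_vectors R d" "p1 = pg_line R u" using point_rep[OF p1] by blast
    obtain v where v: "v \<in> pg_vectors R d" "p2 = pg_line R v" using point_rep[OF p2] by blast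
    have xu: "x \<in> pg_line R u" using x(1) u(2) by simp
    have xv: "x \<in> pg_line R v" using x(2) v(2) by simp
    have "pg_line R x = pg_line R u" using line_eq_of_mem[OF u(1) xu x(3)] .
    moreover have "pg_line R x = pg_line R v" using line_eq_of_mem[OF v(1) xv x(3)] .
    ultimately show ?thesis using u v by simp
  qed
  have disj: "\<forall>c1\<in>?C. \<forall>c2\<in>?C. c1 \<noteq> c2 \<longrightarrow> c1 \<inter> c2 = {}"
  proof (intro ballI impI)
    fix c1 c2 assume c1: "c1 \<in> ?C" and c2: "c2 \<in> ?C" and ne: "c1 \<noteq> c2"
    obtain p1 where p1: "p1 \<in> pg_points R d" "c1 = p1 - {?z}" using c1 by (rule imageE) simp
    obtain p2 where p2: "p2 \<in> pg_points R d" "c2 = p2 - {?z}" using c2 by (rule imageE) simp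
    show "c1 \<inter> c2 = {}"
    proof (rule ccontr)
      assume "c1 \<inter> c2 \<noteq> {}"
      then obtain x where "x \<in> c1" "x \<in> c2" by blast
      then have x: "x \<in> p1" "x \<in> p2" "x \<noteq> ?z" using p1(2) p2(2) by simp_all
      have "p1 = p2" using same[OF p1(1) p2(1) x] .
      then show False using ne p1 p2 by simp
    qed
  qed
  have fC: "finite ?C" using fP by simp
  have fU: "finite (\<Union>?C)" unfolding U using fV by simp
  have part: "(card (carrier R) - 1) * card ?C = card (\<Union>?C)"
  proof (rule card_partition[OF fC fU])
    fix c assume "c \<in> ?C" then show "card c = card (carrier R) - 1" using bspec[OF cards] by simp
  next
    fix c1 c2 assume a: "c1 \<in> ?C" "c2 \<in> ?C" "c1 \<noteq> c2" show "c1 \<inter> c2 = {}" using bspec[OF bspec[OF disj a(1)] a(2)] a(3) by (rule mp)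
  qed
  have inj: "inj_on (\<lambda>p. p - {?z}) (pg_points R d)"
  proof (rule inj_onI)
    fix p1 p2 assume p1: "p1 \<in> pg_points R d" and p2: "p2 \<in> pg_points R d" and e: "p1 - {?z} = p2 - {?z}"
    have "?z \<in> p1" using point_rep[OF p1] line_zero by blast
    moreover have "?z \<in> p2" using point_rep[OF p2] line_zero by blast
    ultimately show "p1 = p2" using e by blast
  qed
  have "card ?C = card (pg_points R d)" using card_image[OF inj] .
  moreover have "card (\<Union>?C) = card (carrier R) ^ d - 1" unfolding U using card_Diff_singleton[OF zV] cV by simp
  ultimately show ?thesis using part by (simp add: mult.commute)
qed

end

lemma card_PG_eq:
  assumes F: "field R" "finite (carrier R)" and F': "field R'" "finite (carrier R')"
    and c: "card (carrier R) = card (carrier R')"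
  shows "card (pg_points R d) = card (pg_points R' d)"
proof -
  have "\<zero>\<^bsub>R\<^esub> \<noteq> \<one>\<^bsub>R\<^esub>" using domain.zero_not_one[OF field.axioms(1)[OF F(1)]] .
  moreover have "\<zero>\<^bsub>R\<^esub> \<in> carrier R" "\<one>\<^bsub>R\<^esub> \<in> carrier R"
    using ring.ring_simprules(2,6)[OF field.is_ring[OF F(1)]] by auto
  then have "{\<zero>\<^bsub>R\<^esub>, \<one>\<^bsub>R\<^esub>} \<subseteq> carrier R" by simp
  then have "card {\<zero>\<^bsub>R\<^esub>, \<one>\<^bsub>R\<^esub>} \<le> card (carrier R)" by (rule card_mono[OF F(2)])
  moreover have "card {\<zero>\<^bsub>R\<^esub>, \<one>\<^bsub>R\<^esub>} = 2" using \<open>\<zero>\<^bsub>R\<^esub> \<noteq> \<one>\<^bsub>R\<^esub>\<close> by simp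
  ultimately have q2: "2 \<le> card (carrier R)" by simp
  have "card (pg_points R d) * (card (carrier R) - 1) = card (pg_points R' d) * (card (carrier R) - 1)"
    using field.count_points[OF F] field.count_points[OF F'] c by simp
  then show ?thesis using q2 by simp
qed

lemma restrict_eq_indep:
  assumes "restrict M1 T = restrict M2 T"
  shows "indep M1 X \<and> X \<subseteq> T \<longleftrightarrow> indep M2 X \<and> X \<subseteq> T"
proof -
  have "indep (restrict M1 T) X = indep (restrict M2 T) X" using assms by simp
  then show ?thesis by simp
qed

lemma gpc_flat:
  assumes "is_gen_par_conn M1 M2 M"
  shows "flat M Z \<longleftrightarrow> Z \<subseteq> gr M \<and> flat M1 (Z \<inter> gr M1) \<and> flat M2 (Z \<inter> gr M2)"
  using assms unfolding is_gen_par_conn_def by blast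

lemma gpc_sub:
  assumes M1: "matroid M1" and M2: "matroid M2" and G: "is_gen_par_conn M1 M2 M"
    and sub: "gr M1 \<subseteq> gr M2"
    and ind: "\<And>X. indep M1 X \<longleftrightarrow> indep M2 X \<and> X \<subseteq> gr M1"
  shows "M = M2"
proof -
  have M: "matroid M" and g: "gr M = gr M1 \<union> gr M2" using G unfolding is_gen_par_conn_def by auto
  have g2: "gr M = gr M2" using g sub by blast
  show ?thesis
  proof (rule same_flats[OF M M2 g2])
    fix Z
    show "flat M Z \<longleftrightarrow> flat M2 Z"
    proof
      assume Z: "flat M Z"
      then have "Z \<subseteq> gr M2" "flat M2 (Z \<inter> gr M2)" using gpc_flat[OF G] g2 by auto
      then show "flat M2 Z" by (simp add: Int_absorb2)
    next
      assume Z: "flat M2 Z"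
      have Zg: "Z \<subseteq> gr M2" using Z by (simp add: flat_def)
      have "flat M1 (Z \<inter> gr M1)" by (rule flat_restr[OF M2 M1 sub ind Z])
      moreover have "flat M2 (Z \<inter> gr M2)" using Z Zg by (simp add: Int_absorb2)
      ultimately show "flat M Z" using gpc_flat[OF G] Zg g2 by simp
    qed
  qed
qed

lemma gpc_sub2:
  assumes M1: "matroid M1" and M2: "matroid M2" and G: "is_gen_par_conn M1 M2 M"
    and sub: "gr M2 \<subseteq> gr M1"
    and ind: "\<And>X. indep M2 X \<longleftrightarrow> indep M1 X \<and> X \<subseteq> gr M2"
  shows "M = M1"
proof -
  have M: "matroid M" and g: "gr M = gr M1 \<union> gr M2" using G unfolding is_gen_par_conn_def by auto
  have g1: "gr M = gr M1" using g sub by blast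
  show ?thesis
  proof (rule same_flats[OF M M1 g1])
    fix Z
    show "flat M Z \<longleftrightarrow> flat M1 Z"
    proof
      assume Z: "flat M Z"
      then have "Z \<subseteq> gr M1" "flat M1 (Z \<inter> gr M1)" using gpc_flat[OF G] g1 by auto
      then show "flat M1 Z" by (simp add: Int_absorb2)
    next
      assume Z: "flat M1 Z"
      have Zg: "Z \<subseteq> gr M1" using Z by (simp add: flat_def)
      have "flat M2 (Z \<inter> gr M2)" by (rule flat_restr[OF M1 M2 sub ind Z])
      moreover have "flat M1 (Z \<inter> gr M1)" using Z Zg by (simp add: Int_absorb2)
      ultimately show "flat M Z" using gpc_flat[OF G] Zg g1 by simp
    qed
  qed
qed

lemma gpc_round_cases:
  assumes M1: "matroid M1" and M2: "matroid M2" and G: "is_gen_par_conn M1 M2 M"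
    and T: "T = gr M1 \<inter> gr M2" and fT: "flat M1 T" and r: "round M"
  shows "gr M1 \<subseteq> gr M2 \<or> mclosure M2 T = gr M2"
proof (rule ccontr)
  assume A: "\<not> (gr M1 \<subseteq> gr M2 \<or> mclosure M2 T = gr M2)"
  have M: "matroid M" and g: "gr M = gr M1 \<union> gr M2" using G unfolding is_gen_par_conn_def by auto
  have T2: "T \<subseteq> gr M2" using T by blast
  have clT: "mclosure M2 T \<subseteq> gr M2" by (rule cl_sub)
  have TclT: "T \<subseteq> mclosure M2 T" by (rule cl_incl[OF T2])
  have F: "flat M (gr M2)"
  proof -
    have "gr M2 \<inter> gr M1 = T" using T by blast
    then show ?thesis using gpc_flat[OF G] g fT flat_gr[of M2] by simp
  qed
  let ?G = "gr M1 \<union> mclosure M2 T"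
  have G': "flat M ?G"
  proof -
    have "?G \<inter> gr M1 = gr M1" by blast
    moreover have "?G \<inter> gr M2 = mclosure M2 T" using T clT TclT by blast
    moreover have "?G \<subseteq> gr M" using g clT by blast
    ultimately show ?thesis using gpc_flat[OF G] flat_gr[of M1] flat_cl[OF M2 T2] by simp
  qed
  have "gr M2 \<noteq> gr M" using A g by blast
  moreover have "?G \<noteq> gr M"
  proof
    assume "?G = gr M"
    then have "gr M2 \<subseteq> mclosure M2 T" using T g TclT by blast
    then show False using A clT by blast
  qed
  moreover have "gr M2 \<union> ?G = gr M" using g clT by blast
  ultimately show False using not_round_flats[OF M F _ G'] r by blast
qed

lemma Mq_main:
  assumes "in_Mq q M"
  shows "matroid M \<and> (round M \<longrightarrow> iso_PG q (matroid_rank M) M)"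
  using assms
proof (induction rule: in_Mq.induct)
  case (pg M)
  then obtain d and R :: "nat ring" where R: "field R" "finite (carrier R)" "card (carrier R) = q" and iso: "miso M (PG R d)"
    unfolding is_PG_over_def iso_PG_def by blast
  have M: "matroid M" and MP: "matroid (PG R d)" using iso unfolding miso_def by auto
  have "matroid_rank M = d" using miso_rank[OF iso] PG_rank[OF R(1) MP] by simp
  then have "iso_PG q (matroid_rank M) M" unfolding iso_PG_def using R iso by blast
  then show ?case using M by blast
next
  case (iso M M')
  have M': "matroid M'" using iso.hyps(2) unfolding miso_def by auto
  show ?case
  proof (intro conjI impI)
    show "matroid M'" by fact
    assume r: "round M'"
    then have "round M" using miso_round[OF iso.hyps(2)] by blast
    then have "iso_PG q (matroid_rank M) M" using iso.IH by blast
    then have "iso_PG q (matroid_rank M) M'" using iso_PG_miso iso.hyps(2) by blast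
    then show "iso_PG q (matroid_rank M') M'" using miso_rank[OF iso.hyps(2)] by simp
  qed
next
  case (gpc M1 M2 T M)
  have M1: "matroid M1" using gpc.IH(1) by blast
  have M2: "matroid M2" using gpc.IH(2) by blast
  have M: "matroid M" and g: "gr M = gr M1 \<union> gr M2" using gpc.hyps(7) unfolding is_gen_par_conn_def by auto
  have fT: "flat M1 T" using gpc.hyps(4) unfolding modular_flat_def by blast
  have req: "indep M1 X \<and> X \<subseteq> T \<longleftrightarrow> indep M2 X \<and> X \<subseteq> T" for X
    using restrict_eq_indep[OF gpc.hyps(5)] .
  have T1: "T \<subseteq> gr M1" and T2: "T \<subseteq> gr M2" using gpc.hyps(3) by auto
  show ?case
  proof (intro conjI impI)
    show "matroid M" by fact
    assume r: "round M"
    have case1: "iso_PG q (matroid_rank M) M" if sub: "gr M1 \<subseteq> gr M2"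
    proof -
      have TE: "T = gr M1" using gpc.hyps(3) sub by blast
      have ind: "indep M1 X \<longleftrightarrow> indep M2 X \<and> X \<subseteq> gr M1" for X
        using req[of X] mat_sub[OF M1, of X] TE by blast
      have "M = M2" by (rule gpc_sub[OF M1 M2 gpc.hyps(7) sub ind])
      then show ?thesis using gpc.IH(2) r by simp
    qed
    have case3: "iso_PG q (matroid_rank M) M" if sub: "gr M2 \<subseteq> gr M1"
    proof -
      have TE: "T = gr M2" using gpc.hyps(3) sub by blast
      have ind: "indep M2 X \<longleftrightarrow> indep M1 X \<and> X \<subseteq> gr M2" for X
        using req[of X] mat_sub[OF M2, of X] TE by blast
      have "M = M1" by (rule gpc_sub2[OF M1 M2 gpc.hyps(7) sub ind])
      then show ?thesis using gpc.IH(1) r by simp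
    qed
    have "gr M1 \<subseteq> gr M2 \<or> mclosure M2 T = gr M2"
      by (rule gpc_round_cases[OF M1 M2 gpc.hyps(7) gpc.hyps(3) fT r])
    then show "iso_PG q (matroid_rank M) M"
    proof
      assume "gr M1 \<subseteq> gr M2" then show ?thesis by (rule case1)
    next
      assume span: "mclosure M2 T = gr M2"
      have PGr: "is_PG_over q (restrict M2 T)" using gpc.hyps(6) gpc.hyps(5) by simp
      then obtain d' and R' :: "nat ring" where R': "field R'" "finite (carrier R')" "card (carrier R') = q"
        and iso': "miso (restrict M2 T) (PG R' d')"
        unfolding is_PG_over_def iso_PG_def by blast
      have MT: "matroid (restrict M2 T)" and MP': "matroid (PG R' d')" using iso' unfolding miso_def by auto
      have "round (PG R' d')" by (rule PG_round[OF R'(1) MP'])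
      then have "round (restrict M2 T)" by (rule miso_round[OF iso'])
      then have "round M2" by (rule restrict_span_round[OF M2 T2 MT span])
      then have "iso_PG q (matroid_rank M2) M2" using gpc.IH(2) by blast
      then obtain R2 :: "nat ring" where R2: "field R2" "finite (carrier R2)" "card (carrier R2) = q"
        and iso2: "miso M2 (PG R2 (matroid_rank M2))"
        unfolding iso_PG_def by blast
      have rkT: "matroid_rank (restrict M2 T) = matroid_rank M2"
        using rank_restrict_gr[OF T2] rank_cl[OF M2 T2] span unfolding matroid_rank_def by simp
      have "matroid_rank (restrict M2 T) = d'" using miso_rank[OF iso'] PG_rank[OF R'(1) MP'] by simp
      then have d': "d' = matroid_rank M2" using rkT by simp
      have "card (gr M2) = card (pg_points R2 (matroid_rank M2))"
        using iso2 unfolding miso_def using bij_betw_same_card by fastforce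
      moreover have "card T = card (pg_points R' d')"
        using iso' unfolding miso_def using bij_betw_same_card by fastforce
      moreover have "card (pg_points R2 (matroid_rank M2)) = card (pg_points R' (matroid_rank M2))"
        by (rule card_PG_eq[OF R2(1,2) R'(1,2)]) (simp add: R2(3) R'(3))
      ultimately have "card T = card (gr M2)" using d' by simp
      then have "T = gr M2" using card_subset_eq[OF mat_fin[OF M2] T2] by simp
      then have "gr M2 \<subseteq> gr M1" using T1 by simp
      then show ?thesis by (rule case3)
    qed
  qed
qed

theorem lemma3p7:
  fixes q r :: nat and M :: "'a matroid"
  assumes "prime_power q"
    and "in_Mq q M"
    and "matroid_rank M = r"
  shows "round M \<longleftrightarrow> iso_PG q r M"
proof
  assume "round M"
  then show "iso_PG q r M" using Mq_main[OF assms(2)] assms(3) by blast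
next
  assume "iso_PG q r M"
  then obtain R :: "nat ring" where R: "field R" and iso: "miso M (PG R r)" unfolding iso_PG_def by blast
  have MP: "matroid (PG R r)" using iso unfolding miso_def by auto
  show "round M" using miso_round[OF iso PG_round[OF R MP]] .
qed

end
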